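(* Let $M$ be a path-connected pre-$\Delta$-monoid with identity $e$, let $\alpha_n\in\Omega(M,e)$ be a null-sequence, let $\beta,\beta':[0,1]\to M$ be paths from $e$ to $b$ that are path-homotopic, and let $\phi:\mathbb{N}\to\mathbb{N}$ be a bijection. Then $\mathcal{S}_\beta^{\alpha_n}\simeq\mathcal{S}_{\beta'}^{\alpha_{\phi(n)}}$ (path-homotopic).
   Context: A pre-$\Delta$-monoid is a space $M$ with an associative operation $\ast$ with identity $e$ such that for any continuous paths $\alpha,\beta:[0,1]\to M$, the pointwise product $t\mapsto\alpha(t)\ast\beta(t)$ is continuous. A sequence of loops $\alpha_n\in\Omega(M,e)$ is a null-sequence if every neighborhood of $e$ contains $\mathrm{Im}(\alpha_n)$ for all but finitely many $n$. Let $\mathcal{C}\subseteq[0,1]$ be the middle-thirds Cantor set and write $[0,1]\setminus\mathcal{C}=\bigcup_{m\ge1}\bigcup_{k=1}^{2^{m-1}}I_m^k$ (open intervals of length $3^{-m}$, indexed left to right for fixed $m$); set $I_n:=I_m^k$ where $n=2^{m-1}+k-1$ (this is a bijection between $\mathbb{N}$ and the components of $[0,1]\setminus\mathcal{C}$). Let $\Gamma:[0,1]\to[0,1]$ be the ternary Cantor function (constant on each $\overline{I_n}$), and $k_n:\overline{I_n}\to[0,1]$ the increasing linear homeomorphism. The transfinite slide of $\{\alpha_n\}$ along a path $\beta:[0,1]\to M$ with $\beta(0)=e$ is the path $\mathcal{S}_\beta^{\alpha_n}:[0,1]\to M$ given by $\mathcal{S}_\beta^{\alpha_n}(t)=\beta(\Gamma(t))$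 for $t\in\mathcal{C}$ and $\mathcal{S}_\beta^{\alpha_n}(t)=\beta(\Gamma(t))\ast\alpha_n(k_n(t))$ for $t\in I_n$. *)

theory Defs
  imports "HOL-Analysis.Analysis"
begin

definition pre_delta_monoid :: "('a::topological_space \<Rightarrow> 'a \<Rightarrow> 'a) \<Rightarrow> 'a \<Rightarrow> bool" where
  "pre_delta_monoid mop e \<longleftrightarrow>
     (\<forall>x y z. mop (mop x y) z = mop x (mop y z)) \<and>
     (\<forall>x. mop e x = x \<and> mop x e = x) \<and>
     (\<forall>\<alpha> \<beta>. path \<alpha> \<and> path \<beta> \<longrightarrow> path (\<lambda>t. mop (\<alpha> t) (\<beta> t)))"

definition loop_at :: "'a::topological_space \<Rightarrow> (real \<Rightarrow> 'a) \<Rightarrow> bool" where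
  "loop_at e \<alpha> \<longleftrightarrow> path \<alpha> \<and> pathstart \<alpha> = e \<and> pathfinish \<alpha> = e"

definition null_sequence :: "'a::topological_space \<Rightarrow> (nat \<Rightarrow> real \<Rightarrow> 'a) \<Rightarrow> bool" where
  "null_sequence e \<alpha> \<longleftrightarrow>
     (\<forall>U. open U \<and> e \<in> U \<longrightarrow> (\<forall>\<^sub>F n in sequentially. path_image (\<alpha> n) \<subseteq> U))"

text \<open>Binary digits of n reinterpreted as ternary digits with 1 replaced by 2.\<close>
fun bin_to_tern02 :: "nat \<Rightarrow> nat" where
  "bin_to_tern02 n = (if n = 0 then 0 else 2 * (n mod 2) + 3 * bin_to_tern02 (n div 2))"

definition gap_level :: "nat \<Rightarrow> nat" where
  "gap_level n = (LEAST m. n < 2 ^ m)"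

text \<open>k - 1 where n = 2^(m-1) + k - 1.\<close>
definition gap_pos :: "nat \<Rightarrow> nat" where
  "gap_pos n = n - 2 ^ (gap_level n - 1)"

definition gap_left :: "nat \<Rightarrow> real" where
  "gap_left n = (3 * real (bin_to_tern02 (gap_pos n)) + 1) / 3 ^ gap_level n"

definition gap_right :: "nat \<Rightarrow> real" where
  "gap_right n = (3 * real (bin_to_tern02 (gap_pos n)) + 2) / 3 ^ gap_level n"

text \<open>I_n = I_m^k, open interval of length 3^(-m), for n \<ge> 1.\<close>
definition gap :: "nat \<Rightarrow> real set" where
  "gap n = {gap_left n <..< gap_right n}"

definition cantor_set :: "real set" where
  "cantor_set = {0..1} - (\<Union>n\<in>{1..}. gap n)"

text \<open>Value (2k-1)/2^m of the Cantor function on the closure of I_m^k.\<close>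
definition gap_value :: "nat \<Rightarrow> real" where
  "gap_value n = (2 * real (gap_pos n) + 1) / 2 ^ gap_level n"

definition cantor_fun :: "real \<Rightarrow> real" where
  "cantor_fun t = Sup (insert 0 {gap_value n | n. n \<ge> 1 \<and> gap_left n \<le> t})"

definition gap_param :: "nat \<Rightarrow> real \<Rightarrow> real" where
  "gap_param n t = (t - gap_left n) / (gap_right n - gap_left n)"

definition gap_index :: "real \<Rightarrow> nat" where
  "gap_index t = (THE n. n \<ge> 1 \<and> t \<in> gap n)"

definition transfinite_slide ::
  "('a \<Rightarrow> 'a \<Rightarrow> 'a) \<Rightarrow> (real \<Rightarrow> 'a) \<Rightarrow> (nat \<Rightarrow> real \<Rightarrow> 'a) \<Rightarrow> real \<Rightarrow> 'a" where
  "transfinite_slide mop \<beta> \<alpha> t =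
     (if t \<in> {0..1} - cantor_set
      then mop (\<beta> (cantor_fun t)) (\<alpha> (gap_index t) (gap_param (gap_index t) t))
      else \<beta> (cantor_fun t))"

end

theory Submission
  imports Defs
begin

declare bin_to_tern02.simps[simp del]

abbreviation T where "T \<equiv> bin_to_tern02"

lemma T0[simp]: "T 0 = 0" by (simp add: bin_to_tern02.simps)
lemma T1[simp]: "T 1 = 2" by (simp add: bin_to_tern02.simps)
lemma T1s[simp]: "T (Suc 0) = 2" by (simp add: bin_to_tern02.simps)

lemma T_rec: "b < 2 \<Longrightarrow> T (2*q + b) = 2*b + 3 * T q"
  by (subst bin_to_tern02.simps) auto

lemma T_rec': "T k = 2 * (k mod 2) + 3 * T (k div 2)"
  using T_rec[of "k mod 2" "k div 2"] by simp

lemma T_decomp: "T k = 3^d * T (k div 2^d) + T (k mod 2^d)"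
proof (induction d arbitrary: k)
  case 0 then show ?case by simp
next
  case (Suc d)
  define a where "a = k div 2^d"
  have m: "k mod 2^(Suc d) = 2^d * (a mod 2) + k mod 2^d"
    unfolding a_def power_Suc2 by (rule mod_mult2_eq)
  have lt: "k mod 2^d < 2^d" by simp
  have d1: "(k mod 2^(Suc d)) div 2^d = a mod 2"
    using m lt by simp
  have d2: "(k mod 2^(Suc d)) mod 2^d = k mod 2^d"
    using m lt by (simp add: mod_mult2_eq)
  have Tm: "T (a mod 2) = 2 * (a mod 2)"
    by (cases "a mod 2 = 0") (auto simp: mod2_eq_if)
  have "T (k mod 2^(Suc d)) = 3^d * (2 * (a mod 2)) + T (k mod 2^d)"
    using Suc.IH[of "k mod 2^(Suc d)"] d1 d2 Tm by simp
  moreover have "T a = 2 * (a mod 2) + 3 * T (a div 2)" by (rule T_rec')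
  moreover have "k div 2^(Suc d) = a div 2" unfolding a_def power_Suc2 by (rule div_mult2_eq)
  ultimately show ?case using Suc.IH[of k] unfolding a_def[symmetric]
    by (simp add: algebra_simps)
qed

lemma T_bound: "k < 2^d \<Longrightarrow> T k + 1 \<le> 3^d"
proof (induction d arbitrary: k)
  case 0 then show ?case by simp
next
  case (Suc d)
  have "k div 2 < 2^d" using Suc.prems by auto
  then have "T (k div 2) + 1 \<le> 3^d" by (rule Suc.IH)
  moreover have "k mod 2 \<le> 1" by simp
  ultimately show ?case using T_rec'[of k] by simp
qed

lemma T_mono: "k < k' \<Longrightarrow> T k + 2 \<le> T k'"
proof (induction k' arbitrary: k rule: less_induct)
  case (less k')
  show ?case
  proof (cases "k div 2 < k' div 2")
    case True
    have "k' div 2 < k'" using less.prems by auto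
    then have "T (k div 2) + 2 \<le> T (k' div 2)" using less.IH True by blast
    moreover have "k mod 2 \<le> 1" "k' mod 2 \<ge> 0" by auto
    ultimately show ?thesis using T_rec'[of k] T_rec'[of k'] by linarith
  next
    case False
    then have e: "k div 2 = k' div 2" using less.prems
      by (meson div_le_mono le_antisym not_less less_imp_le_nat)
    have "k = 2*(k div 2) + k mod 2" "k' = 2*(k' div 2) + k' mod 2" by simp_all
    moreover have "k mod 2 < 2" "k' mod 2 < 2" by simp_all
    ultimately have "k mod 2 = 0" "k' mod 2 = 1" using less.prems e by linarith+
    then show ?thesis using T_rec'[of k] T_rec'[of k'] e by simp
  qed
qed

lemma lev: assumes "n \<ge> 1" shows "1 \<le> gap_level n" "2^(gap_level n - 1) \<le> n" "n < 2^gap_level n"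
proof -
  have ex: "\<exists>m. n < 2^m" using less_exp by blast
  show 3: "n < 2^gap_level n" unfolding gap_level_def by (rule LeastI_ex[OF ex])
  show "1 \<le> gap_level n"
  proof (rule ccontr)
    assume "\<not> 1 \<le> gap_level n" then have "gap_level n = 0" by simp
    with 3 assms show False by simp
  qed
  then have "gap_level n - 1 < gap_level n" by simp
  then have "\<not> n < 2^(gap_level n - 1)" unfolding gap_level_def by (rule not_less_Least)
  then show "2^(gap_level n - 1) \<le> n" by simp
qed

lemma lev_of: assumes "1 \<le> m" "k < 2^(m-1)" shows "gap_level (2^(m-1)+k) = m"
  unfolding gap_level_def
proof (rule Least_equality)
  have "(2::nat)^m = 2 * 2^(m-1)" using assms(1) by (metis Suc_diff_1 less_le_trans power_Suc zero_less_one)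
  then show "2 ^ (m - 1) + k < 2 ^ m" using assms by simp
next
  fix y assume h: "2 ^ (m - 1) + k < (2::nat) ^ y"
  have "(2::nat)^(m-1) < 2^y" using h by linarith
  then have "m - 1 < y" using power_less_imp_less_exp[of "2::nat" "m-1" y] by simp
  then show "m \<le> y" by simp
qed

lemma pos_of: assumes "1 \<le> m" "k < 2^(m-1)" shows "gap_pos (2^(m-1)+k) = k"
  unfolding gap_pos_def lev_of[OF assms] by simp

lemma pos_lt: assumes "n \<ge> 1" shows "gap_pos n < 2^(gap_level n - 1)"
proof -
  have "(2::nat)^gap_level n = 2 * 2^(gap_level n - 1)" using lev(1)[OF assms]
    by (metis Suc_diff_1 less_le_trans power_Suc zero_less_one)
  then show ?thesis using lev[OF assms] unfolding gap_pos_def by simp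
qed

lemma n_eq: assumes "n \<ge> 1" shows "n = 2^(gap_level n - 1) + gap_pos n"
  using lev[OF assms] unfolding gap_pos_def by simp

lemma cell_nat:
  assumes "a = k div 2^d"
  shows "3^(d+1) * T a \<le> 3*T k + 1" "3*T k + 2 \<le> 3^(d+1)*(T a + 1)"
        "2^(d+1)*a < 2*k+1" "2*k+1 < 2^(d+1)*(a+1)"
proof -
  have dec: "T k = 3^d * T a + T (k mod 2^d)" using T_decomp[of k d] assms by simp
  have b: "T (k mod 2^d) + 1 \<le> 3^d" by (rule T_bound) simp
  have kk: "k = 2^d * a + k mod 2^d" using assms by simp
  have r: "k mod 2^d < 2^d" by simp
  show "3^(d+1) * T a \<le> 3*T k + 1" using dec by simp
  show "3*T k + 2 \<le> 3^(d+1)*(T a + 1)" using dec b by (simp add: algebra_simps)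
  show "2^(d+1)*a < 2*k+1" using kk by (simp add: algebra_simps)
  have e1: "2*k+1 = 2*(a*2^d) + 2*(k mod 2^d) + 1" using kk by (simp add: algebra_simps)
  have e2: "(2::nat)^(d+1)*(a+1) = 2*(a*2^d) + 2*2^d" by (simp add: algebra_simps)
  show "2*k+1 < 2^(d+1)*(a+1)" unfolding e1 e2 using r by linarith
qed

lemma frac_le1: "(x::real) * c \<le> y \<Longrightarrow> c > 0 \<Longrightarrow> p > 0 \<Longrightarrow> x / p \<le> y / (c * p)"
  by (simp add: field_simps)
lemma frac_le2: "(y::real) \<le> c * x \<Longrightarrow> c > 0 \<Longrightarrow> p > 0 \<Longrightarrow> y / (c * p) \<le> x / p"
  by (simp add: field_simps)
lemma frac_lt1: "(x::real) * c < y \<Longrightarrow> c > 0 \<Longrightarrow> p > 0 \<Longrightarrow> x / p < y / (c * p)"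
  by (simp add: field_simps)
lemma frac_lt2: "(y::real) < c * x \<Longrightarrow> c > 0 \<Longrightarrow> p > 0 \<Longrightarrow> y / (c * p) < x / p"
  by (simp add: field_simps)

lemma cellR:
  assumes n: "n \<ge> 1" and d: "d+1 \<le> gap_level n"
  defines "a \<equiv> gap_pos n div 2^d" and "j \<equiv> gap_level n - (d+1)"
  shows "real (T a) / 3^j \<le> gap_left n"
        "gap_right n \<le> (real (T a) + 1) / 3^j"
        "real a / 2^j < gap_value n"
        "gap_value n < (real a + 1) / 2^j"
proof -
  define k where "k = gap_pos n"
  have m: "gap_level n = (d+1) + j" using d unfolding j_def by simp
  have p3: "(3::real)^gap_level n = 3^(d+1) * 3^j" unfolding m by (simp add: power_add)
  have p2: "(2::real)^gap_level n = 2^(d+1) * 2^j" unfolding m by (simp add: power_add)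
  have ak: "a = k div 2^d" unfolding a_def k_def by simp
  note c = cell_nat[OF ak]
  have c1: "real (T a) * 3^(d+1) \<le> 3*real (T k) + 1"
    using c(1) by (metis (mono_tags, lifting) mult.commute of_nat_add of_nat_le_iff of_nat_mult of_nat_numeral of_nat_power of_nat_1)
  have c2: "3*real (T k) + 2 \<le> 3^(d+1) * (real (T a) + 1)"
    using c(2) by (metis (mono_tags, lifting) of_nat_add of_nat_le_iff of_nat_mult of_nat_numeral of_nat_power of_nat_1)
  have c3: "real a * 2^(d+1) < 2*real k + 1"
    using c(3) by (metis (mono_tags, lifting) mult.commute of_nat_add of_nat_less_iff of_nat_mult of_nat_numeral of_nat_power of_nat_1)
  have c4: "2*real k + 1 < 2^(d+1) * (real a + 1)"
    using c(4) by (metis (mono_tags, lifting) of_nat_add of_nat_less_iff of_nat_mult of_nat_numeral of_nat_power of_nat_1)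
  show "real (T a) / 3^j \<le> gap_left n"
    unfolding gap_left_def p3 k_def[symmetric] by (rule frac_le1[OF c1]) auto
  show "gap_right n \<le> (real (T a) + 1) / 3^j"
    unfolding gap_right_def p3 k_def[symmetric] by (rule frac_le2[OF c2]) auto
  show "real a / 2^j < gap_value n"
    unfolding gap_value_def p2 k_def[symmetric] by (rule frac_lt1[OF c3]) auto
  show "gap_value n < (real a + 1) / 2^j"
    unfolding gap_value_def p2 k_def[symmetric] by (rule frac_lt2[OF c4]) auto
qed

lemma key_le:
  assumes n: "n \<ge> 1" and n': "n' \<ge> 1" and lv: "gap_level n \<le> gap_level n'" and ne: "n \<noteq> n'"
  shows "(gap_right n \<le> gap_left n' \<and> gap_value n < gap_value n') \<or>
         (gap_right n' \<le> gap_left n \<and> gap_value n' < gap_value n)"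
proof -
  define m where "m = gap_level n"
  define m' where "m' = gap_level n'"
  define k where "k = gap_pos n"
  define k' where "k' = gap_pos n'"
  define d where "d = m' - m"
  define q where "q = k' div 2^d"
  have m1: "1 \<le> m" using lev[OF n] m_def by simp
  have dm: "d + 1 \<le> m'" using lv m1 unfolding d_def m_def m'_def by simp
  have jj: "m' - (d+1) = m - 1" using lv m1 unfolding d_def m_def m'_def by simp
  note A = cellR[OF n' dm[unfolded m'_def], folded m'_def k'_def q_def, unfolded jj]
  have dm0: "0 + 1 \<le> m" using m1 by simp
  note B = cellR[OF n dm0[unfolded m_def], folded m_def k_def, simplified]
  define P where "P = (3::real)^(m-1)"
  define Q where "Q = (2::real)^(m-1)"
  have P0: "P > 0" and Q0: "Q > 0" unfolding P_def Q_def by simp_all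
  have A1: "real (T q)/P \<le> gap_left n'" "gap_right n' \<le> (real (T q)+1)/P"
     "real q/Q < gap_value n'" "gap_value n' < (real q + 1)/Q"
    using A unfolding q_def P_def Q_def by simp_all
  have B1: "real (T k)/P \<le> gap_left n" "gap_right n \<le> (real (T k)+1)/P"
     "real k/Q < gap_value n" "gap_value n < (real k + 1)/Q"
    using B unfolding P_def Q_def by simp_all
  consider "q < k" | "k < q" | "q = k" by linarith
  then show ?thesis
  proof cases
    case 1
    have t: "real (T q) + 2 \<le> real (T k)" using T_mono[OF 1] by linarith
    have "(real (T q)+1)/P < real (T k)/P" using t P0 by (simp add: divide_strict_right_mono)
    moreover have "(real q + 1)/Q \<le> real k/Q" using 1 Q0 by (simp add: divide_right_mono)
    ultimately show ?thesis using A1 B1 by linarith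
  next
    case 2
    have t: "real (T k) + 2 \<le> real (T q)" using T_mono[OF 2] by linarith
    have "(real (T k)+1)/P < real (T q)/P" using t P0 by (simp add: divide_strict_right_mono)
    moreover have "(real k + 1)/Q \<le> real q/Q" using 2 Q0 by (simp add: divide_right_mono)
    ultimately show ?thesis using A1 B1 by linarith
  next
    case 3
    have d0: "d \<noteq> 0"
    proof
      assume "d = 0"
      then have "m' = m" "k' = k" using lv 3 unfolding d_def m_def m'_def q_def by simp_all
      then show False using ne n_eq[OF n] n_eq[OF n'] unfolding m_def m'_def k_def k'_def by metis
    qed
    have dm2: "(d-1) + 1 \<le> m'" using dm by simp
    have jj2: "m' - ((d-1)+1) = m" using d0 lv unfolding d_def m_def m'_def by simp
    define a where "a = k' div 2^(d-1)"
    note C = cellR[OF n' dm2[unfolded m'_def], folded m'_def k'_def a_def, unfolded jj2]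
    have C1: "real (T a)/3^m \<le> gap_left n'" "gap_right n' \<le> (real (T a)+1)/3^m"
      "real a/2^m < gap_value n'" "gap_value n' < (real a + 1)/2^m"
      using C unfolding a_def by simp_all
    have "a div 2 = k' div (2^(d-1)*2)" unfolding a_def by (simp add: div_mult2_eq)
    also have "2^(d-1)*2 = (2::nat)^d" using d0 by (metis Suc_diff_1 not_gr0 power_Suc2)
    finally have ad: "a div 2 = k" using 3 q_def by simp
    have Ta: "T a = 2 * (a mod 2) + 3 * T k" using T_rec'[of a] ad by simp
    have aa: "a = 2*k + a mod 2" using ad div_mult_mod_eq[of a 2] by linarith
    have L: "gap_left n = (3*real (T k)+1)/3^m" unfolding gap_left_def m_def k_def by simp
    have R: "gap_right n = (3*real (T k)+2)/3^m" unfolding gap_right_def m_def k_def by simp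
    have V: "gap_value n = (2*real k+1)/2^m" unfolding gap_value_def m_def k_def by simp
    show ?thesis
    proof (cases "a mod 2 = 0")
      case True
      have "T a = 3 * T k" "a = 2*k" using Ta aa True by simp_all
      then have "real (T a) + 1 = 3*real (T k)+1" "real a + 1 = 2*real k+1" by simp_all
      then show ?thesis using C1 L V by (simp add: R)
    next
      case False
      then have b: "a mod 2 = 1" by simp
      have "T a = 3 * T k + 2" "a = 2*k+1" using Ta aa b by simp_all
      then have "real (T a) = 3*real (T k)+2" "real a = 2*real k+1" by simp_all
      then show ?thesis using C1 R V by (simp add: L)
    qed
  qed
qed

lemma key:
  assumes n: "n \<ge> 1" and n': "n' \<ge> 1" and ne: "n \<noteq> n'"
  shows "(gap_right n \<le> gap_left n' \<and> gap_value n < gap_value n') \<or>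
         (gap_right n' \<le> gap_left n \<and> gap_value n' < gap_value n)"
proof (cases "gap_level n \<le> gap_level n'")
  case True then show ?thesis using key_le[OF n n' True ne] by blast
next
  case False then show ?thesis using key_le[OF n' n _ ne[symmetric]] by linarith
qed

lemma gap_bounds: assumes n: "n \<ge> 1" shows "0 < gap_left n" "gap_left n < gap_right n" "gap_right n < 1"
proof -
  define m where "m = gap_level n"
  define k where "k = gap_pos n"
  have k: "k < 2^(m-1)" using pos_lt[OF n] unfolding m_def k_def .
  have m1: "1 \<le> m" using lev[OF n] m_def by simp
  have "T k + 1 \<le> 3^(m-1)" using T_bound[OF k] .
  moreover have "(3::nat)^m = 3*3^(m-1)" using m1 by (cases m) auto
  ultimately have "3 * T k + 3 \<le> 3^m" by linarith
  then have "real (3 * T k + 3) \<le> real (3^m)" by (simp only: of_nat_le_iff)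
  then have "3 * real (T k) + 3 \<le> 3^m" by simp
  then show "gap_right n < 1" unfolding gap_right_def m_def[symmetric] k_def[symmetric] by (simp add: divide_less_eq)
  show "0 < gap_left n" unfolding gap_left_def by simp
  show "gap_left n < gap_right n" unfolding gap_left_def gap_right_def by (simp add: divide_strict_right_mono)
qed

lemma value_bounds: assumes n: "n \<ge> 1" shows "0 < gap_value n" "gap_value n < 1"
proof -
  define m where "m = gap_level n"
  define k where "k = gap_pos n"
  have k: "k < 2^(m-1)" using pos_lt[OF n] unfolding m_def k_def .
  have m1: "1 \<le> m" using lev[OF n] m_def by simp
  have "(2::nat)^m = 2*2^(m-1)" using m1 by (cases m) auto
  then have "2*k + 1 < 2^m" using k by linarith
  then have "real (2*k + 1) < real (2^m)" by (simp only: of_nat_less_iff)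
  then have "2 * real k + 1 < 2^m" by simp
  then show "gap_value n < 1" unfolding gap_value_def m_def[symmetric] k_def[symmetric] by (simp add: divide_less_eq)
  show "0 < gap_value n" unfolding gap_value_def by simp
qed

definition Sg :: "real \<Rightarrow> real set" where
  "Sg t = insert 0 {gap_value n | n. n \<ge> 1 \<and> gap_left n \<le> t}"

lemma G_def': "cantor_fun t = Sup (Sg t)" unfolding cantor_fun_def Sg_def by simp

lemma value_le1: "Suc 0 \<le> n \<Longrightarrow> gap_value n \<le> 1" using value_bounds(2)[of n] by simp

lemma Sg_le1: "x \<in> Sg t \<Longrightarrow> x \<le> 1"
  unfolding Sg_def using value_le1 by auto

lemma Sg_bdd: "bdd_above (Sg t)" using Sg_le1 by (meson bdd_above.I)

lemma G_mono: assumes tt: "t \<le> t'" shows "cantor_fun t \<le> cantor_fun t'"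
  unfolding G_def'
proof (rule cSup_subset_mono)
  show "Sg t \<noteq> {}" by (simp add: Sg_def)
  show "bdd_above (Sg t')" by (rule Sg_bdd)
  show "Sg t \<subseteq> Sg t'" unfolding Sg_def using tt by auto
qed

lemma G_ge0: "0 \<le> cantor_fun t"
  unfolding G_def' by (rule cSup_upper[OF _ Sg_bdd]) (simp add: Sg_def)

lemma G_le1: "cantor_fun t \<le> 1"
  unfolding G_def' by (rule cSup_least) (auto simp: Sg_def dest: value_le1)

lemma G_gap: assumes n: "n \<ge> 1" and x: "gap_left n < x" "x < gap_right n"
  shows "cantor_fun x = gap_value n"
  unfolding G_def'
proof (rule cSup_eq_maximum)
  show "gap_value n \<in> Sg x" unfolding Sg_def using n x by auto
  show "y \<le> gap_value n" if "y \<in> Sg x" for y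
  proof -
    from that consider "y = 0" | n' where "n' \<ge> 1" "gap_left n' \<le> x" "y = gap_value n'" unfolding Sg_def by auto
    then show "y \<le> gap_value n"
    proof cases
      case 1 then show ?thesis using value_bounds[OF n] by simp
    next
      case 2
      show ?thesis
      proof (cases "n' = n")
        case False
        then show ?thesis using key[OF n 2(1) False[symmetric]] 2 x by auto
      qed (use 2 in simp)
    qed
  qed
qed

lemma G0: "cantor_fun 0 = 0"
proof -
  have "Sg 0 = {0}" unfolding Sg_def using gap_bounds(1) by force
  then show ?thesis unfolding G_def' by simp
qed

lemma density:
  assumes a: "0 \<le> a" "a < b" "b \<le> 1"
  shows "\<exists>n\<ge>1. a < gap_value n \<and> gap_value n < b"
proof -
  obtain m0 where m0: "(1/2::real)^m0 < (b-a)/2" using real_arch_pow_inv[of "(b-a)/2" "1/2"] a by auto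
  define m where "m = Suc m0"
  have "(1/2::real)^m \<le> (1/2)^m0" unfolding m_def by (simp add: power_decreasing)
  then have "(1/2::real)^m < (b-a)/2" using m0 by (rule le_less_trans)
  then have m2: "2 / 2^m < b - a" by (simp add: power_one_over divide_simps)
  have m1: "1 \<le> m" unfolding m_def by simp
  define P where "P = (2::real)^m"
  have P0: "P > 0" unfolding P_def by simp
  define j where "j = nat \<lfloor>a * P\<rfloor>"
  have aP: "0 \<le> a * P" using a P0 by simp
  have j1: "real j \<le> a * P" "a * P < real j + 1" unfolding j_def using aP
    by (simp_all add: of_nat_nat)
  define w where "w = (if even (j+1) then j+2 else j+1)"
  have ood: "odd w" unfolding w_def by auto
  have o1: "a * P < real w" "real w \<le> real j + 2" unfolding w_def using j1 by auto
  have "real w \<le> a * P + 2" using o1 j1 by linarith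
  also have "\<dots> < b * P" using m2 P0 unfolding P_def by (simp add: field_simps)
  finally have ob: "real w < b * P" .
  define k where "k = w div 2"
  have ok: "w = 2*k+1" unfolding k_def using ood by simp
  have "b * P \<le> P" using a P0 by (simp add: mult_left_le_one_le)
  then have "real w < P" using ob by linarith
  then have "w < 2^m" unfolding P_def by (metis of_nat_less_iff of_nat_numeral of_nat_power)
  moreover have "(2::nat)^m = 2*2^(m-1)" using m1 by (cases m) auto
  ultimately have k: "k < 2^(m-1)" using ok by linarith
  define n where "n = 2^(m-1) + k"
  have "(1::nat) \<le> 2^(m-1)" by simp
  then have n1: "n \<ge> 1" unfolding n_def by linarith
  have v: "gap_value n = real w / P"
    unfolding gap_value_def n_def lev_of[OF m1 k] pos_of[OF m1 k] P_def ok by simp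
  have "a < gap_value n" unfolding v using o1 P0 by (simp add: field_simps)
  moreover have "gap_value n < b" unfolding v using ob P0 by (simp add: field_simps)
  ultimately show ?thesis using n1 by blast
qed

lemma G1: "cantor_fun 1 = 1"
proof (rule antisym[OF G_le1])
  show "1 \<le> cantor_fun 1"
  proof (rule field_le_epsilon)
    fix e :: real assume e: "0 < e"
    show "1 \<le> cantor_fun 1 + e"
    proof (cases "e \<ge> 1")
      case True then show ?thesis using G_ge0[of 1] by simp
    next
      case False
      obtain n where n: "n \<ge> 1" "1 - e < gap_value n" "gap_value n < 1"
        using density[of "1-e" 1] e False by auto
      have "gap_value n \<in> Sg 1" unfolding Sg_def using n(1) gap_bounds[OF n(1)] by auto
      then have "gap_value n \<le> cantor_fun 1" unfolding G_def' by (rule cSup_upper[OF _ Sg_bdd])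
      then show ?thesis using n by simp
    qed
  qed
qed

lemma G_up: assumes e: "e > 0" shows "\<exists>d>0. \<forall>t'. t' < t + d \<longrightarrow> cantor_fun t' < cantor_fun t + e"
proof (cases "cantor_fun t < 1")
  case True
  obtain n where n: "n \<ge> 1" "cantor_fun t < gap_value n" "gap_value n < min 1 (cantor_fun t + e)"
    using density[of "cantor_fun t" "min 1 (cantor_fun t + e)"] True e G_ge0[of t] by auto
  define x where "x = (gap_left n + gap_right n)/2"
  have x: "gap_left n < x" "x < gap_right n" unfolding x_def using gap_bounds[OF n(1)] by auto
  have Gx: "cantor_fun x = gap_value n" by (rule G_gap[OF n(1) x])
  have "t < x" using G_mono[of x t] Gx n(2) by (cases "x \<le> t") auto
  show ?thesis
  proof (intro exI[of _ "x - t"] conjI allI impI)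
    show "0 < x - t" using \<open>t < x\<close> by simp
    fix t' assume "t' < t + (x - t)"
    then have "cantor_fun t' \<le> cantor_fun x" by (intro G_mono) simp
    then show "cantor_fun t' < cantor_fun t + e" using Gx n by simp
  qed
next
  case False
  then show ?thesis using G_le1 e by (intro exI[of _ 1]) (smt (verit))
qed

lemma G_lo: assumes e: "e > 0" shows "\<exists>d>0. \<forall>t'. t - d < t' \<longrightarrow> cantor_fun t - e < cantor_fun t'"
proof (cases "0 < cantor_fun t")
  case True
  obtain n where n: "n \<ge> 1" "max 0 (cantor_fun t - e) < gap_value n" "gap_value n < cantor_fun t"
    using density[of "max 0 (cantor_fun t - e)" "cantor_fun t"] True e G_le1[of t] by auto
  define x where "x = (gap_left n + gap_right n)/2"
  have x: "gap_left n < x" "x < gap_right n" unfolding x_def using gap_bounds[OF n(1)] by auto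
  have Gx: "cantor_fun x = gap_value n" by (rule G_gap[OF n(1) x])
  have "x < t" using G_mono[of t x] Gx n(3) by (cases "t \<le> x") auto
  show ?thesis
  proof (intro exI[of _ "t - x"] conjI allI impI)
    show "0 < t - x" using \<open>x < t\<close> by simp
    fix t' assume "t - (t - x) < t'"
    then have "cantor_fun x \<le> cantor_fun t'" by (intro G_mono) simp
    then show "cantor_fun t - e < cantor_fun t'" using Gx n by simp
  qed
next
  case False
  then show ?thesis using G_ge0 e by (intro exI[of _ 1]) (smt (verit))
qed

lemma G_cont: "continuous_on UNIV cantor_fun"
  unfolding continuous_on_iff
proof (intro ballI allI impI)
  fix t e :: real assume e: "0 < e"
  obtain d1 where d1: "d1 > 0" "\<forall>t'. t' < t + d1 \<longrightarrow> cantor_fun t' < cantor_fun t + e" using G_up[OF e] by blast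
  obtain d2 where d2: "d2 > 0" "\<forall>t'. t - d2 < t' \<longrightarrow> cantor_fun t - e < cantor_fun t'" using G_lo[OF e] by blast
  show "\<exists>d>0. \<forall>x'\<in>UNIV. dist x' t < d \<longrightarrow> dist (cantor_fun x') (cantor_fun t) < e"
  proof (intro exI[of _ "min d1 d2"] conjI ballI impI)
    show "0 < min d1 d2" using d1 d2 by simp
    fix x' assume "dist x' t < min d1 d2"
    then have "x' < t + d1" "t - d2 < x'" by (auto simp: dist_real_def)
    then have "cantor_fun x' < cantor_fun t + e" "cantor_fun t - e < cantor_fun x'" using d1(2) d2(2) by blast+
    then show "dist (cantor_fun x') (cantor_fun t) < e" by (simp add: dist_real_def abs_less_iff)
  qed
qed

definition cp :: "real \<Rightarrow> real \<Rightarrow> real \<Rightarrow> real" where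
  "cp a b t = max 0 (min 1 ((t - a)/(b - a)))"

definition ix :: "(nat \<Rightarrow> real) \<Rightarrow> (nat \<Rightarrow> real) \<Rightarrow> real \<Rightarrow> nat" where
  "ix l r t = (THE n. n \<ge> 1 \<and> l n < t \<and> t < r n)"

definition arr :: "'a \<Rightarrow> (nat \<Rightarrow> real) \<Rightarrow> (nat \<Rightarrow> real) \<Rightarrow> (nat \<Rightarrow> real \<Rightarrow> 'a) \<Rightarrow> real \<Rightarrow> 'a" where
  "arr e l r \<beta> t = (if \<exists>n\<ge>1. l n < t \<and> t < r n
      then \<beta> (ix l r t) ((t - l (ix l r t)) / (r (ix l r t) - l (ix l r t))) else e)"

definition ivf :: "(nat \<Rightarrow> real) \<Rightarrow> (nat \<Rightarrow> real) \<Rightarrow> bool" where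
  "ivf l r \<longleftrightarrow> (\<forall>n\<ge>1. 0 \<le> l n \<and> l n < r n \<and> r n \<le> 1) \<and>
     (\<forall>n\<ge>1. \<forall>m\<ge>1. n \<noteq> m \<longrightarrow> r n \<le> l m \<or> r m \<le> l n)"

definition lf :: "'a::topological_space \<Rightarrow> (nat \<Rightarrow> real \<Rightarrow> 'a) \<Rightarrow> bool" where
  "lf e \<beta> \<longleftrightarrow> (\<forall>n\<ge>1. path (\<beta> n) \<and> \<beta> n 0 = e \<and> \<beta> n 1 = e)"

lemma cp_cont: "continuous_on UNIV (cp a b)"
  unfolding cp_def divide_inverse by (intro continuous_intros)

lemma cp_range: "cp a b t \<in> {0..1}" unfolding cp_def by auto

lemma cp_le: "a < b \<Longrightarrow> t \<le> a \<Longrightarrow> cp a b t = 0"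
  unfolding cp_def by (auto simp: divide_le_0_iff)

lemma cp_ge: "a < b \<Longrightarrow> b \<le> t \<Longrightarrow> cp a b t = 1"
  unfolding cp_def by (auto simp: le_divide_eq)

lemma cp_in: "a < b \<Longrightarrow> a \<le> t \<Longrightarrow> t \<le> b \<Longrightarrow> cp a b t = (t - a)/(b - a)"
  unfolding cp_def by (auto simp: divide_le_eq le_divide_eq)

lemma ivfD: assumes "ivf l r" "n \<ge> 1" shows "0 \<le> l n" "l n < r n" "r n \<le> 1"
  using assms unfolding ivf_def by auto

lemma ivf_disj: assumes "ivf l r" "n \<ge> 1" "m \<ge> 1" "n \<noteq> m" shows "r n \<le> l m \<or> r m \<le> l n"
  using assms unfolding ivf_def by auto

lemma ix_eq: assumes iv: "ivf l r" and n: "n \<ge> 1" "l n < t" "t < r n" shows "ix l r t = n"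
  unfolding ix_def
proof (rule the_equality)
  show "n \<ge> 1 \<and> l n < t \<and> t < r n" using n by simp
  fix m assume m: "m \<ge> 1 \<and> l m < t \<and> t < r m"
  show "m = n"
  proof (rule ccontr)
    assume "m \<noteq> n"
    then show False using ivf_disj[OF iv _ _ \<open>m \<noteq> n\<close>] m n by fastforce
  qed
qed

lemma arr_in: assumes iv: "ivf l r" and n: "n \<ge> 1" "l n < t" "t < r n"
  shows "arr e l r \<beta> t = \<beta> n (cp (l n) (r n) t)"
  using n ix_eq[OF iv n] cp_in[of "l n" "r n" t] unfolding arr_def by auto

lemma arr_out: "\<not> (\<exists>n\<ge>1. l n < t \<and> t < r n) \<Longrightarrow> arr e l r \<beta> t = e"
  unfolding arr_def by auto

lemma arr_closed: assumes iv: "ivf l r" and lf: "lf e \<beta>" and n: "n \<ge> 1" "l n \<le> t" "t \<le> r n"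
  shows "arr e l r \<beta> t = \<beta> n (cp (l n) (r n) t)"
proof (cases "l n < t \<and> t < r n")
  case True then show ?thesis using arr_in[OF iv n(1)] by auto
next
  case False
  have lr: "l n < r n" using ivfD[OF iv n(1)] by simp
  have "\<not> (\<exists>m\<ge>1. l m < t \<and> t < r m)"
  proof
    assume "\<exists>m\<ge>1. l m < t \<and> t < r m"
    then obtain m where m: "m \<ge> 1" "l m < t" "t < r m" by blast
    show False
    proof (cases "m = n")
      case True then show False using m False by simp
    next
      case ne: False
      show False using ivf_disj[OF iv m(1) n(1) ne] m n False by (smt (verit))
    qed
  qed
  then have "arr e l r \<beta> t = e" by (rule arr_out)
  moreover have "t = l n \<or> t = r n" using False n by auto
  then have "\<beta> n (cp (l n) (r n) t) = e" using lf n(1) cp_le[OF lr] cp_ge[OF lr] unfolding lf_def by auto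
  ultimately show ?thesis by simp
qed

lemma arr_img: assumes iv: "ivf l r"
  shows "arr e l r \<beta> t = e \<or> (\<exists>n\<ge>1. \<exists>u\<in>{0..1}. arr e l r \<beta> t = \<beta> n u)"
proof (cases "\<exists>n\<ge>1. l n < t \<and> t < r n")
  case True
  then obtain n where n: "n \<ge> 1" "l n < t" "t < r n" by blast
  then show ?thesis using arr_in[OF iv n, where e=e and \<beta>=\<beta>] cp_range by blast
qed (simp add: arr_out)

lemma path_cont_UNIV:
  assumes "path p" shows "continuous_on UNIV (\<lambda>t. p (cp a b t))"
proof -
  have "continuous_on UNIV (p \<circ> cp a b)"
    using assms unfolding path_def
    by (intro continuous_on_compose cp_cont) (auto intro: continuous_on_subset cp_range)
  then show ?thesis by (simp add: o_def)
qed

lemma arr_path: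
  fixes \<beta> :: "nat \<Rightarrow> real \<Rightarrow> 'a::topological_space"
  assumes iv: "ivf l r" and lf: "lf e \<beta>" and nul: "null_sequence e \<beta>"
  shows "path (arr e l r \<beta>)"
  unfolding path_def continuous_on_topological
proof (intro ballI allI impI)
  fix t B assume t: "t \<in> {0..1::real}" and B: "open B" "arr e l r \<beta> t \<in> B"
  define q where "q n s = \<beta> n (cp (l n) (r n) s)" for n s
  have qc: "n \<ge> 1 \<Longrightarrow> continuous_on UNIV (q n)" for n
    unfolding q_def using lf path_cont_UNIV unfolding lf_def by blast
  show "\<exists>A. open A \<and> t \<in> A \<and> (\<forall>y\<in>{0..1}. y \<in> A \<longrightarrow> arr e l r \<beta> y \<in> B)"
  proof (cases "\<exists>n\<ge>1. l n < t \<and> t < r n")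
    case True
    then obtain n where n: "n \<ge> 1" "l n < t" "t < r n" by blast
    have qB: "q n t \<in> B" using B arr_in[OF iv n, where e=e and \<beta>=\<beta>] unfolding q_def by simp
    obtain A0 where A0: "open A0" "t \<in> A0" "\<forall>y\<in>UNIV. y \<in> A0 \<longrightarrow> q n y \<in> B"
      using continuous_on_topological[THEN iffD1, OF qc[OF n(1)], rule_format, OF UNIV_I B(1) qB] by blast
    show ?thesis
    proof (intro exI[of _ "A0 \<inter> {l n<..<r n}"] conjI ballI impI)
      show "open (A0 \<inter> {l n<..<r n})" using A0 by auto
      show "t \<in> A0 \<inter> {l n<..<r n}" using A0 n by auto
      fix y assume "y \<in> A0 \<inter> {l n<..<r n}"
      then show "arr e l r \<beta> y \<in> B" using arr_in[OF iv n(1), where e=e and \<beta>=\<beta>] A0 unfolding q_def by auto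
    qed
  next
    case False
    have eB: "e \<in> B" using B arr_out[OF False, where e=e and \<beta>=\<beta>] by simp
    obtain N where N: "\<forall>n\<ge>N. path_image (\<beta> n) \<subseteq> B"
      using nul B(1) eB unfolding null_sequence_def eventually_sequentially by blast
    have qt: "n \<ge> 1 \<Longrightarrow> q n t = e" for n
    proof -
      assume n: "n \<ge> 1"
      have lr: "l n < r n" using ivfD[OF iv n] by simp
      have "t \<le> l n \<or> r n \<le> t" using False n by force
      then show "q n t = e" using lf n cp_le[OF lr] cp_ge[OF lr] unfolding q_def lf_def by auto
    qed
    have Aex: "\<forall>n\<in>{1..<N}. \<exists>A. open A \<and> t \<in> A \<and> (\<forall>y. y \<in> A \<longrightarrow> q n y \<in> B)"
    proof
      fix n assume "n \<in> {1..<N}"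
      then have n: "n \<ge> 1" by simp
      have qB: "q n t \<in> B" using eB qt[OF n] by simp
      show "\<exists>A. open A \<and> t \<in> A \<and> (\<forall>y. y \<in> A \<longrightarrow> q n y \<in> B)"
        using continuous_on_topological[THEN iffD1, OF qc[OF n], rule_format, OF UNIV_I B(1) qB] by simp
    qed
    obtain Af where Af: "\<forall>n\<in>{1..<N}. open (Af n) \<and> t \<in> Af n \<and> (\<forall>y. y \<in> Af n \<longrightarrow> q n y \<in> B)"
      using bchoice[OF Aex] by blast
    show ?thesis
    proof (intro exI[of _ "\<Inter>n\<in>{1..<N}. Af n"] conjI ballI impI)
      show "open (\<Inter>n\<in>{1..<N}. Af n)" using Af by (intro open_INT) auto
      show "t \<in> (\<Inter>n\<in>{1..<N}. Af n)" using Af by auto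
      fix y assume y: "y \<in> (\<Inter>n\<in>{1..<N}. Af n)"
      show "arr e l r \<beta> y \<in> B"
      proof (cases "\<exists>n\<ge>1. l n < y \<and> y < r n")
        case True
        then obtain n where n: "n \<ge> 1" "l n < y" "y < r n" by blast
        show ?thesis
        proof (cases "n < N")
          case True
          then show ?thesis using Af y n arr_in[OF iv n, where e=e and \<beta>=\<beta>] unfolding q_def by auto
        next
          case False
          then have "path_image (\<beta> n) \<subseteq> B" using N by simp
          then show ?thesis using arr_in[OF iv n, where e=e and \<beta>=\<beta>] cp_range unfolding path_image_def by blast
        qed
      next
        case False
        then show ?thesis using eB arr_out[OF False, where e=e and \<beta>=\<beta>] by simp
      qed
    qed
  qed
qed

definition \<nu> :: "nat \<Rightarrow> real" where "\<nu> n = 1 - 1 / real (Suc n)"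
definition idx :: "real \<Rightarrow> nat" where "idx s = nat \<lfloor>1 / (1 - s)\<rfloor> - 1"

lemma \<nu>0[simp]: "\<nu> 0 = 0" unfolding \<nu>_def by simp
lemma \<nu>_lt1: "\<nu> n < 1" unfolding \<nu>_def by simp
lemma \<nu>_ge0: "0 \<le> \<nu> n" unfolding \<nu>_def by (simp add: field_simps)
lemma \<nu>_mono: "\<nu> n < \<nu> (Suc n)" unfolding \<nu>_def by (simp add: field_simps)
lemma \<nu>_strict: "m < n \<Longrightarrow> \<nu> m < \<nu> n" unfolding \<nu>_def by (simp add: field_simps)
lemma \<nu>_le: "m \<le> n \<Longrightarrow> \<nu> m \<le> \<nu> n" unfolding \<nu>_def by (simp add: field_simps)
lemma \<nu>_diff: "\<nu> (Suc n) - \<nu> n = 1 / ((real n + 1) * (real n + 2))"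
  unfolding \<nu>_def by (simp add: field_simps)
lemma \<nu>_lim: "\<nu> \<longlonglongrightarrow> 1"
proof -
  have "(\<lambda>n. 1 - inverse (real (Suc n))) \<longlonglongrightarrow> 1 - 0"
    by (intro tendsto_intros LIMSEQ_inverse_real_of_nat)
  then show ?thesis unfolding \<nu>_def by (simp add: inverse_eq_divide)
qed
lemma \<nu>_above: "s < 1 \<Longrightarrow> \<exists>n. s < \<nu> n"
proof -
  assume s: "s < 1"
  obtain n where n: "1 / (1 - s) < real n" using reals_Archimedean2 by blast
  have "1/(1-s) > 0" using s by simp
  then have "1 / real (Suc n) < 1 - s" using n s by (simp add: field_simps)
  then show ?thesis unfolding \<nu>_def by (intro exI[of _ n]) simp
qed

lemma idx_eq: assumes "\<nu> n \<le> s" "s < \<nu> (Suc n)" shows "idx s = n"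
proof -
  have s1: "s < 1" using assms(2) \<nu>_lt1 by (meson less_trans)
  have a: "1 / real (Suc n) \<ge> 1 - s" using assms(1) unfolding \<nu>_def by simp
  have b: "1 - s > 1 / real (Suc (Suc n))" using assms(2) unfolding \<nu>_def by simp
  have "real (Suc n) \<le> 1/(1-s)" using a s1 by (simp add: field_simps)
  moreover have "1/(1-s) < real (Suc (Suc n))" using b s1 by (simp add: field_simps)
  ultimately have "\<lfloor>1/(1-s)\<rfloor> = int (Suc n)" by (simp add: floor_eq_iff)
  then show ?thesis unfolding idx_def by simp
qed

lemma idx_bounds: assumes "0 \<le> s" "s < 1" shows "\<nu> (idx s) \<le> s" "s < \<nu> (Suc (idx s))"
proof -
  define k where "k = \<lfloor>1/(1-s)\<rfloor>"
  have g1: "1/(1-s) \<ge> 1" using assms by (simp add: field_simps)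
  then have k1: "k \<ge> 1" unfolding k_def by (metis floor_mono floor_one)
  have ki: "real (idx s) + 1 = of_int k" unfolding idx_def k_def[symmetric] using k1 by simp
  have kb: "of_int k \<le> 1/(1-s)" "1/(1-s) < of_int k + 1" unfolding k_def by linarith+
  have s1: "1 - s > 0" using assms by simp
  have "1 - s \<le> 1 / of_int k" using kb(1) s1 k1 by (simp add: field_simps)
  have ki': "1 + real (idx s) = of_int k" using ki by simp
  then show "\<nu> (idx s) \<le> s" unfolding \<nu>_def using \<open>1 - s \<le> 1 / of_int k\<close> by simp
  have "1 / (of_int k + 1) < 1 - s" using kb(2) s1 k1 by (simp add: field_simps)
  then show "s < \<nu> (Suc (idx s))" unfolding \<nu>_def using ki' by (simp add: add.commute)
qed

lemma idx_ge: assumes "0 \<le> s" "s < 1" "\<nu> N < s" shows "N \<le> idx s"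
proof (rule ccontr)
  assume "\<not> N \<le> idx s"
  then have "Suc (idx s) \<le> N" by simp
  then have "\<nu> (Suc (idx s)) \<le> \<nu> N" by (rule \<nu>_le)
  then show False using idx_bounds[OF assms(1,2)] assms(3) by simp
qed

lemma seg_cont_full:
  fixes f :: "real \<times> 'b::topological_space \<Rightarrow> 'c::topological_space"
  assumes X: "closed X"
    and pieces: "\<And>n. continuous_on ({\<nu> n..\<nu> (Suc n)} \<times> X) f"
    and top: "\<And>x B. x \<in> X \<Longrightarrow> open B \<Longrightarrow> f (1,x) \<in> B \<Longrightarrow>
       \<exists>A N. open A \<and> x \<in> A \<and> (\<forall>s y. \<nu> N < s \<and> s \<le> 1 \<and> y \<in> X \<and> y \<in> A \<longrightarrow> f (s,y) \<in> B)"
  shows "continuous_on ({0..1} \<times> X) f"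
proof -
  have init: "continuous_on ({0..\<nu> N} \<times> X) f" for N
  proof (induction N)
    case 0
    show ?case by (rule continuous_on_subset[OF pieces[of 0]]) (auto simp: \<nu>_ge0)
  next
    case (Suc N)
    have "{0..\<nu> (Suc N)} \<times> X = ({0..\<nu> N} \<times> X) \<union> ({\<nu> N..\<nu> (Suc N)} \<times> X)"
      using \<nu>_ge0[of N] \<nu>_mono[of N] by auto
    then show ?case using Suc pieces[of N] X
      by (metis closed_Times closed_atLeastAtMost continuous_on_closed_Un)
  qed
  show ?thesis unfolding continuous_on_topological
  proof (intro ballI allI impI)
    fix z B assume z: "z \<in> {0..1} \<times> X" and B: "open B" "f z \<in> B"
    obtain s x where sx: "z = (s,x)" by fastforce
    show "\<exists>A. open A \<and> z \<in> A \<and> (\<forall>y\<in>{0..1} \<times> X. y \<in> A \<longrightarrow> f y \<in> B)"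
    proof (cases "s < 1")
      case True
      obtain N where N: "s < \<nu> N" using \<nu>_above[OF True] by blast
      have zN: "z \<in> {0..\<nu> N} \<times> X" using z N sx by auto
      obtain A0 where A0: "open A0" "z \<in> A0" "\<forall>y\<in>{0..\<nu> N} \<times> X. y \<in> A0 \<longrightarrow> f y \<in> B"
        using continuous_on_topological[THEN iffD1, OF init[of N], rule_format, OF zN B] by blast
      show ?thesis
      proof (intro exI[of _ "A0 \<inter> ({..<\<nu> N} \<times> UNIV)"] conjI ballI impI)
        show "open (A0 \<inter> ({..<\<nu> N} \<times> UNIV))" using A0(1) by (intro open_Int open_Times) auto
        show "z \<in> A0 \<inter> ({..<\<nu> N} \<times> UNIV)" using A0(2) N sx by auto
        fix y assume "y \<in> {0..1} \<times> X" "y \<in> A0 \<inter> ({..<\<nu> N} \<times> UNIV)"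
        then show "f y \<in> B" using A0(3) by (cases y) auto
      qed
    next
      case False
      then have s1: "s = 1" using z sx by auto
      obtain A N where AN: "open A" "x \<in> A" "\<forall>s y. \<nu> N < s \<and> s \<le> 1 \<and> y \<in> X \<and> y \<in> A \<longrightarrow> f (s,y) \<in> B"
        using top[of x B] z B sx s1 by auto
      show ?thesis
      proof (intro exI[of _ "{\<nu> N<..} \<times> A"] conjI ballI impI)
        show "open ({\<nu> N<..} \<times> A)" using AN(1) by (intro open_Times) auto
        show "z \<in> {\<nu> N<..} \<times> A" using sx s1 AN(2) \<nu>_lt1[of N] by auto
        fix y assume "y \<in> {0..1} \<times> X" "y \<in> {\<nu> N<..} \<times> A"
        then show "f y \<in> B" using AN(3) by (cases y) auto
      qed
    qed
  qed
qed

lemma pts: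
  fixes z :: "nat \<Rightarrow> real \<times> real"
  assumes conv: "convex S" and zS: "\<And>n. z n \<in> S" and pS: "p \<in> S" and lim: "z \<longlonglongrightarrow> p"
  shows "\<exists>c. path c \<and> c ` {0..1} \<subseteq> S \<and> c 1 = p \<and> (\<forall>n. c (\<nu> n) = z n)"
proof -
  define \<theta> where "\<theta> n t = (t - \<nu> n) * ((real n + 1) * (real n + 2))" for n t
  define L where "L n t = (1 - \<theta> n t) *\<^sub>R z n + \<theta> n t *\<^sub>R z (Suc n)" for n t
  define c where "c t = (if 1 \<le> t then p else L (idx t) t)" for t
  have th1: "\<theta> n (\<nu> (Suc n)) = 1" for n
  proof -
    have "real n + 1 > 0" "real n + 2 > 0" by simp_all
    then show ?thesis unfolding \<theta>_def \<nu>_diff by simp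
  qed
  have th0: "\<theta> n (\<nu> n) = 0" for n unfolding \<theta>_def by simp
  have thr: "0 \<le> \<theta> n t \<and> \<theta> n t \<le> 1" if "\<nu> n \<le> t" "t \<le> \<nu> (Suc n)" for n t
  proof -
    have "0 \<le> \<theta> n t" unfolding \<theta>_def using that by simp
    moreover have "\<theta> n t \<le> \<theta> n (\<nu> (Suc n))" unfolding \<theta>_def using that by (intro mult_right_mono) auto
    ultimately show ?thesis using th1 by simp
  qed
  have cL: "c t = L n t" if "\<nu> n \<le> t" "t \<le> \<nu> (Suc n)" for n t
  proof (cases "t < \<nu> (Suc n)")
    case True
    then show ?thesis unfolding c_def using idx_eq[OF that(1) True] \<nu>_lt1[of "Suc n"] by auto
  next
    case False
    then have t: "t = \<nu> (Suc n)" using that by simp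
    have "idx t = Suc n" unfolding t by (rule idx_eq) (auto simp: \<nu>_mono)
    then have "c t = L (Suc n) t" unfolding c_def using \<nu>_lt1[of "Suc n"] t by auto
    also have "\<dots> = z (Suc n)" unfolding L_def t th0 by simp
    also have "\<dots> = L n t" unfolding L_def t th1 by simp
    finally show ?thesis .
  qed
  have cnu: "c (\<nu> n) = z n" for n using cL[of n "\<nu> n"] \<nu>_mono[of n] unfolding L_def th0 by simp
  have cseg: "c t \<in> closed_segment (z (idx t)) (z (Suc (idx t)))" if "0 \<le> t" "t < 1" for t
  proof -
    note b = idx_bounds[OF that]
    have "c t = L (idx t) t" using cL b by simp
    then show ?thesis unfolding L_def closed_segment_def using thr[of "idx t" t] b by auto
  qed
  have img: "c ` {0..1} \<subseteq> S"
  proof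
    fix y assume "y \<in> c ` {0..1}"
    then obtain t where t: "t \<in> {0..1}" "y = c t" by blast
    show "y \<in> S"
    proof (cases "t = 1")
      case True then show ?thesis using t pS unfolding c_def by simp
    next
      case False
      then have "0 \<le> t" "t < 1" using t by auto
      then show ?thesis using cseg[of t] closed_segment_subset[OF zS zS conv] t by blast
    qed
  qed
  have cont2: "continuous_on ({0..1} \<times> {0::real}) (\<lambda>q. c (fst q))"
  proof (rule seg_cont_full)
    show "closed {0::real}" by simp
    fix n
    have "continuous_on ({\<nu> n..\<nu> (Suc n)} \<times> {0::real}) (\<lambda>q. L n (fst q))"
      unfolding L_def \<theta>_def by (intro continuous_intros)
    then show "continuous_on ({\<nu> n..\<nu> (Suc n)} \<times> {0::real}) (\<lambda>q. c (fst q))"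
      by (rule continuous_on_eq) (auto intro!: cL[symmetric])
  next
    fix x :: real and B assume B: "open B" "c (fst (1, x)) \<in> B"
    then have pB: "p \<in> B" unfolding c_def by simp
    obtain \<epsilon> where \<epsilon>: "\<epsilon> > 0" "ball p \<epsilon> \<subseteq> B" using B(1) pB openE by blast
    obtain N where N: "\<forall>n\<ge>N. dist (z n) p < \<epsilon>"
      using lim \<epsilon>(1) unfolding tendsto_iff eventually_sequentially by blast
    show "\<exists>A N. open A \<and> x \<in> A \<and> (\<forall>s y. \<nu> N < s \<and> s \<le> 1 \<and> y \<in> {0} \<and> y \<in> A \<longrightarrow> c (fst (s, y)) \<in> B)"
    proof (intro exI[of _ UNIV] exI[of _ N] conjI allI impI)
      fix s y :: real assume sy: "\<nu> N < s \<and> s \<le> 1 \<and> y \<in> {0} \<and> y \<in> UNIV"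
      show "c (fst (s, y)) \<in> B"
      proof (cases "s = 1")
        case True then show ?thesis using pB unfolding c_def by simp
      next
        case False
        then have s: "0 \<le> s" "s < 1" using sy \<nu>_ge0[of N] by auto
        have n: "N \<le> idx s" using idx_ge[OF s] sy by simp
        have "z (idx s) \<in> ball p \<epsilon>" "z (Suc (idx s)) \<in> ball p \<epsilon>" using N n by (auto simp: dist_commute)
        then have "closed_segment (z (idx s)) (z (Suc (idx s))) \<subseteq> ball p \<epsilon>"
          by (intro closed_segment_subset) auto
        then show ?thesis using cseg[OF s] \<epsilon>(2) by auto
      qed
    qed auto
  qed
  have "continuous_on {0..1} ((\<lambda>q. c (fst q)) \<circ> (\<lambda>t. (t, 0::real)))"
    by (rule continuous_on_compose[OF _ continuous_on_subset[OF cont2]]) (auto intro!: continuous_intros)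
  then have "path c" unfolding path_def by (simp add: o_def)
  moreover have "c 1 = p" unfolding c_def by simp
  ultimately show ?thesis using img cnu by blast
qed

locale pdm =
  fixes mop :: "'a::topological_space \<Rightarrow> 'a \<Rightarrow> 'a" and e :: 'a
  assumes pdm: "pre_delta_monoid mop e"
begin

lemma lid[simp]: "mop e x = x" using pdm unfolding pre_delta_monoid_def by blast
lemma rid[simp]: "mop x e = x" using pdm unfolding pre_delta_monoid_def by blast
lemma prod_path: "path a \<Longrightarrow> path b \<Longrightarrow> path (\<lambda>t. mop (a t) (b t))"
  using pdm unfolding pre_delta_monoid_def by blast

lemma prod_cont:
  fixes f g :: "real \<times> real \<Rightarrow> 'a"
  assumes f: "continuous_on S f" and g: "continuous_on S g" and conv: "convex S"
  shows "continuous_on S (\<lambda>q. mop (f q) (g q))"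
  unfolding continuous_on_eq_continuous_within
proof
  fix a assume a: "a \<in> S"
  show "continuous (at a within S) (\<lambda>q. mop (f q) (g q))"
    unfolding continuous_within_sequentially
  proof (intro allI impI)
    fix x :: "nat \<Rightarrow> real \<times> real" assume x: "(\<forall>n. x n \<in> S) \<and> x \<longlonglongrightarrow> a"
    obtain c where c: "path c" "c ` {0..1} \<subseteq> S" "c 1 = a" "\<forall>n. c (\<nu> n) = x n"
      using pts[OF conv _ a] x by blast
    have "path (f \<circ> c)" "path (g \<circ> c)" using c(1,2) f g unfolding path_def o_def
      by (auto intro: continuous_on_compose2)
    then have hp: "path (\<lambda>t. mop (f (c t)) (g (c t)))" using prod_path[of "f \<circ> c" "g \<circ> c"] by (simp add: o_def)
    have "(\<lambda>n. mop (f (c (\<nu> n))) (g (c (\<nu> n)))) \<longlonglongrightarrow> mop (f (c 1)) (g (c 1))"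
      using continuous_on_tendsto_compose[OF hp[unfolded path_def] \<nu>_lim]
      by (simp add: \<nu>_ge0 less_imp_le[OF \<nu>_lt1])
    then show "((\<lambda>q. mop (f q) (g q)) \<circ> x) \<longlonglongrightarrow> mop (f a) (g a)"
      using c(3,4) by (simp add: o_def)
  qed
qed

end

definition l\<omega> :: "nat \<Rightarrow> real" where "l\<omega> n = \<nu> (n - 1)"
definition r\<omega> :: "nat \<Rightarrow> real" where "r\<omega> n = \<nu> n"

lemma ivf_\<omega>: "ivf l\<omega> r\<omega>"
  unfolding ivf_def l\<omega>_def r\<omega>_def
proof (intro conjI allI impI)
  fix n :: nat assume n: "1 \<le> n"
  show "0 \<le> \<nu> (n - 1)" by (rule \<nu>_ge0)
  show "\<nu> (n - 1) < \<nu> n" using n by (intro \<nu>_strict) simp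
  show "\<nu> n \<le> 1" using \<nu>_lt1[of n] by simp
next
  fix n m :: nat assume "1 \<le> n" "1 \<le> m" "n \<noteq> m"
  then show "\<nu> n \<le> \<nu> (m - 1) \<or> \<nu> m \<le> \<nu> (n - 1)"
    by (cases "n < m") (auto intro!: \<nu>_le)
qed

lemma arr_\<omega>_1: "arr e l\<omega> r\<omega> \<beta> 1 = e"
  by (rule arr_out) (auto simp: r\<omega>_def less_imp_le[OF \<nu>_lt1] not_less)

definition \<psi> :: "real \<Rightarrow> real \<Rightarrow> real" where
  "\<psi> u v = 2 * u * min v (1/2) + (1 - u) * max 0 (2 * v - 1)"

lemma \<psi>_cont: "continuous_on S (\<psi> u)" unfolding \<psi>_def by (intro continuous_intros)
lemma \<psi>_range: "u \<in> {0..1} \<Longrightarrow> v \<in> {0..1} \<Longrightarrow> \<psi> u v \<in> {0..1}"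
proof -
  assume u: "u \<in> {0..1}" and v: "v \<in> {0..1}"
  have m2: "2 * min v (1/2) \<le> 1" "0 \<le> min v (1/2)" using v by (auto simp: min_def)
  have "u * (2 * min v (1/2)) \<le> u" using u m2 by (intro mult_left_le) auto
  then have a: "0 \<le> 2 * u * min v (1/2)" "2 * u * min v (1/2) \<le> u" using u m2 by (auto simp: algebra_simps)
  have b: "0 \<le> (1 - u) * max 0 (2 * v - 1)" "(1 - u) * max 0 (2 * v - 1) \<le> 1 - u"
    using u v by (auto simp: max_def intro: mult_left_le)
  show ?thesis using a b unfolding \<psi>_def by auto
qed
lemma \<psi>_0[simp]: "\<psi> u 0 = 0" unfolding \<psi>_def by simp
lemma \<psi>_1[simp]: "\<psi> u 1 = 1" unfolding \<psi>_def by simp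
lemma \<psi>_half[simp]: "\<psi> u (1/2) = u" unfolding \<psi>_def by simp

definition Prod :: "('a \<Rightarrow> 'a \<Rightarrow> 'a) \<Rightarrow> (nat \<Rightarrow> real \<Rightarrow> 'a) \<Rightarrow> nat \<Rightarrow> 'a set" where
  "Prod mop \<alpha> k = {mop (\<alpha> m u) (\<alpha> m' u') | m m' u u'. k < m \<and> k < m' \<and> u \<in> {0..1} \<and> u' \<in> {0..1}}"

lemma Prod_mono: "K \<le> k \<Longrightarrow> Prod mop \<alpha> k \<subseteq> Prod mop \<alpha> K"
  unfolding Prod_def by fastforce

context pdm
begin

lemma reparam_loops:
  assumes lf: "lf e \<alpha>" and nul: "null_sequence e \<alpha>"
    and M: "\<And>n. n < M n" and U: "\<And>n. U n \<in> {0..1}"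
  defines "\<beta> \<equiv> \<lambda>n v. \<alpha> (M n) (\<psi> (U n) v)"
  shows "lf e \<beta>" "null_sequence e \<beta>"
proof -
  have M1: "1 \<le> M n" for n using M[of n] by simp
  have pim: "path_image (\<beta> n) \<subseteq> path_image (\<alpha> (M n))" for n
    unfolding path_image_def \<beta>_def using \<psi>_range[OF U] by auto
  show "lf e \<beta>" unfolding lf_def
  proof (intro allI impI conjI)
    fix n :: nat
    have "path (\<alpha> (M n))" using lf M1 unfolding lf_def by blast
    then show "path (\<beta> n)" unfolding path_def \<beta>_def
      by (intro continuous_on_compose2[OF _ \<psi>_cont]) (use \<psi>_range[OF U] in auto)
    show "\<beta> n 0 = e" "\<beta> n 1 = e" unfolding \<beta>_def using lf M1 unfolding lf_def by auto
  qed
  show "null_sequence e \<beta>" unfolding null_sequence_def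
  proof (intro allI impI)
    fix W assume W: "open W \<and> e \<in> W"
    then obtain N where N: "\<forall>n\<ge>N. path_image (\<alpha> n) \<subseteq> W"
      using nul unfolding null_sequence_def eventually_sequentially by blast
    show "\<forall>\<^sub>F n in sequentially. path_image (\<beta> n) \<subseteq> W"
      unfolding eventually_sequentially
    proof (intro exI[of _ N] allI impI)
      fix n assume "N \<le> n"
      then have "N \<le> M n" using M[of n] by simp
      then have "path_image (\<alpha> (M n)) \<subseteq> W" using N by blast
      then show "path_image (\<beta> n) \<subseteq> W" using pim[of n] by blast
    qed
  qed
qed

lemma small:
  assumes lf: "lf e \<alpha>" and nul: "null_sequence e \<alpha>" and W: "open W" "e \<in> W"
  shows "\<exists>K. \<forall>k\<ge>K. Prod mop \<alpha> k \<subseteq> W"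
proof (rule ccontr)
  assume na: "\<not> ?thesis"
  have nP: "\<not> Prod mop \<alpha> K \<subseteq> W" for K
  proof
    assume a: "Prod mop \<alpha> K \<subseteq> W"
    have "\<forall>k\<ge>K. Prod mop \<alpha> k \<subseteq> W"
    proof (intro allI impI)
      fix k assume "K \<le> k"
      then have "Prod mop \<alpha> k \<subseteq> Prod mop \<alpha> K" by (rule Prod_mono)
      then show "Prod mop \<alpha> k \<subseteq> W" using a by (rule subset_trans)
    qed
    then show False using na by blast
  qed
  have Fex: "\<forall>K. \<exists>q. K < fst q \<and> K < fst (snd q) \<and> fst (snd (snd q)) \<in> {0..1} \<and> snd (snd (snd q)) \<in> {0..1}
      \<and> mop (\<alpha> (fst q) (fst (snd (snd q)))) (\<alpha> (fst (snd q)) (snd (snd (snd q)))) \<notin> W"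
  proof
    fix K
    obtain x where x: "x \<in> Prod mop \<alpha> K" "x \<notin> W" using nP[of K] by blast
    then obtain m m' u u' where "x = mop (\<alpha> m u) (\<alpha> m' u')" "K < m" "K < m'" "u \<in> {0..1}" "u' \<in> {0..1}"
      unfolding Prod_def by blast
    then show "\<exists>q. K < fst q \<and> K < fst (snd q) \<and> fst (snd (snd q)) \<in> {0..1} \<and> snd (snd (snd q)) \<in> {0..1}
      \<and> mop (\<alpha> (fst q) (fst (snd (snd q)))) (\<alpha> (fst (snd q)) (snd (snd (snd q)))) \<notin> W"
      using x(2) by (intro exI[of _ "(m, m', u, u')"]) simp
  qed
  from choice[OF Fex] obtain F where F: "\<forall>K. K < fst (F K) \<and> K < fst (snd (F K)) \<and> fst (snd (snd (F K))) \<in> {0..1} \<and> snd (snd (snd (F K))) \<in> {0..1}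
      \<and> mop (\<alpha> (fst (F K)) (fst (snd (snd (F K))))) (\<alpha> (fst (snd (F K))) (snd (snd (snd (F K))))) \<notin> W"
    by blast
  define M where "M K = fst (F K)" for K
  define M' where "M' K = fst (snd (F K))" for K
  define U where "U K = fst (snd (snd (F K)))" for K
  define U' where "U' K = snd (snd (snd (F K)))" for K
  have FM: "\<And>K. K < M K" "\<And>K. K < M' K" "\<And>K. U K \<in> {0..1}" "\<And>K. U' K \<in> {0..1}"
     "\<And>K. mop (\<alpha> (M K) (U K)) (\<alpha> (M' K) (U' K)) \<notin> W"
    unfolding M_def M'_def U_def U'_def using F by simp_all
  define \<beta> where "\<beta> = (\<lambda>n v. \<alpha> (M n) (\<psi> (U n) v))"
  define \<beta>' where "\<beta>' = (\<lambda>n v. \<alpha> (M' n) (\<psi> (U' n) v))"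
  have b: "lf e \<beta>" "null_sequence e \<beta>" unfolding \<beta>_def by (rule reparam_loops[OF lf nul FM(1,3)])+
  have b': "lf e \<beta>'" "null_sequence e \<beta>'" unfolding \<beta>'_def by (rule reparam_loops[OF lf nul FM(2,4)])+
  define c where "c = arr e l\<omega> r\<omega> \<beta>"
  define d where "d = arr e l\<omega> r\<omega> \<beta>'"
  have pc: "path c" unfolding c_def by (rule arr_path[OF ivf_\<omega> b])
  have pd: "path d" unfolding d_def by (rule arr_path[OF ivf_\<omega> b'])
  have hp: "path (\<lambda>t. mop (c t) (d t))" by (rule prod_path[OF pc pd])
  define \<mu> where "\<mu> n = (\<nu> n + \<nu> (Suc n)) / 2" for n
  have \<mu>lim0: "\<mu> \<longlonglongrightarrow> (1 + 1) / 2"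
  proof -
    have "(\<lambda>n. \<nu> (Suc n)) \<longlonglongrightarrow> 1" by (rule LIMSEQ_Suc[OF \<nu>_lim])
    then show ?thesis unfolding \<mu>_def by (intro tendsto_divide tendsto_add \<nu>_lim) auto
  qed
  have \<mu>lim: "\<mu> \<longlonglongrightarrow> 1" using \<mu>lim0 by simp
  have \<mu>r: "\<mu> n \<in> {0..1}" for n using \<nu>_ge0[of n] \<nu>_lt1[of "Suc n"] \<nu>_mono[of n] unfolding \<mu>_def by auto
  have \<mu>in: "l\<omega> (Suc n) < \<mu> n" "\<mu> n < r\<omega> (Suc n)" for n
    using \<nu>_mono[of n] unfolding \<mu>_def l\<omega>_def r\<omega>_def by auto
  have cp\<mu>: "cp (\<nu> n) (\<nu> (Suc n)) (\<mu> n) = 1/2" for n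
    using \<nu>_mono[of n] unfolding \<mu>_def by (subst cp_in) (auto simp: field_simps)
  have cpl: "cp (l\<omega> (Suc n)) (r\<omega> (Suc n)) (\<mu> n) = 1/2" for n
    unfolding l\<omega>_def r\<omega>_def using cp\<mu> by simp
  have cmu: "c (\<mu> n) = \<alpha> (M (Suc n)) (U (Suc n))" for n
  proof -
    have "c (\<mu> n) = \<beta> (Suc n) (cp (l\<omega> (Suc n)) (r\<omega> (Suc n)) (\<mu> n))"
      unfolding c_def by (rule arr_in[OF ivf_\<omega> _ \<mu>in(1) \<mu>in(2)]) simp
    then show ?thesis unfolding cpl \<beta>_def by simp
  qed
  have dmu: "d (\<mu> n) = \<alpha> (M' (Suc n)) (U' (Suc n))" for n
  proof -
    have "d (\<mu> n) = \<beta>' (Suc n) (cp (l\<omega> (Suc n)) (r\<omega> (Suc n)) (\<mu> n))"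
      unfolding d_def by (rule arr_in[OF ivf_\<omega> _ \<mu>in(1) \<mu>in(2)]) simp
    then show ?thesis unfolding cpl \<beta>'_def by simp
  qed
  have "(\<lambda>n. mop (c (\<mu> n)) (d (\<mu> n))) \<longlonglongrightarrow> mop (c 1) (d 1)"
  proof -
    have ev: "\<forall>\<^sub>F n in sequentially. \<mu> n \<in> {0..1}" using \<mu>r by simp
    have one: "(1::real) \<in> {0..1}" by simp
    show ?thesis using continuous_on_tendsto_compose[OF hp[unfolded path_def] \<mu>lim one ev] by simp
  qed
  moreover have "mop (c 1) (d 1) = e" unfolding c_def d_def arr_\<omega>_1 by simp
  ultimately have lim': "(\<lambda>n. mop (c (\<mu> n)) (d (\<mu> n))) \<longlonglongrightarrow> e" by simp
  have "\<forall>\<^sub>F n in sequentially. mop (c (\<mu> n)) (d (\<mu> n)) \<in> W"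
    by (rule topological_tendstoD[OF lim' W(1) W(2)])
  then obtain N where "mop (c (\<mu> N)) (d (\<mu> N)) \<in> W" unfolding eventually_sequentially by blast
  then show False using FM(5)[of "Suc N"] cmu dmu by simp
qed

end

definition \<sigma>1 :: "(nat \<Rightarrow> real) \<Rightarrow> (nat \<Rightarrow> real) \<Rightarrow> nat \<Rightarrow> real \<Rightarrow> real \<times> real" where
  "\<sigma>1 l r k u = (cp (l (Suc k)) (r (Suc k)) u, u)"
definition \<sigma>2 :: "nat \<Rightarrow> real \<Rightarrow> real \<times> real" where
  "\<sigma>2 k u = (min 1 ((real k + 2) * u), max 0 ((u * (real k + 2) - 1) / (real k + 1)))"

definition sq :: "(real \<times> real) set" where "sq = {0..1} \<times> {0..1}"

lemma convex_sq: "convex sq" unfolding sq_def by (intro convex_Times convex_real_interval)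
lemma closed_sq: "closed sq" unfolding sq_def by (intro closed_Times closed_atLeastAtMost)

lemma \<sigma>1_path: "path (\<sigma>1 l r k)"
  unfolding path_def \<sigma>1_def by (intro continuous_on_Pair continuous_on_subset[OF cp_cont] continuous_intros) auto
lemma \<sigma>2_path: "path (\<sigma>2 k)"
  unfolding path_def \<sigma>2_def by (intro continuous_intros) auto

lemma sq_hom: assumes iv: "ivf l r" shows "homotopic_paths sq (\<sigma>1 l r k) (\<sigma>2 k)"
proof (rule homotopic_paths_linear[OF \<sigma>1_path \<sigma>2_path])
  have lr: "l (Suc k) < r (Suc k)" "0 \<le> l (Suc k)" "r (Suc k) \<le> 1" using ivfD[OF iv, of "Suc k"] by auto
  show "pathstart (\<sigma>2 k) = pathstart (\<sigma>1 l r k)"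
    unfolding pathstart_def \<sigma>1_def \<sigma>2_def using cp_le[OF lr(1), of 0] lr by simp
  show "pathfinish (\<sigma>2 k) = pathfinish (\<sigma>1 l r k)"
    unfolding pathfinish_def \<sigma>1_def \<sigma>2_def using cp_ge[OF lr(1), of 1] lr by simp
  fix t :: real assume t: "t \<in> {0..1}"
  have a: "\<sigma>1 l r k t \<in> sq" unfolding \<sigma>1_def sq_def using t cp_range by auto
  have "(u * (real k + 2) - 1) / (real k + 1) \<le> 1" if "u \<le> 1" for u
  proof -
    have "u * (real k + 2) \<le> 1 * (real k + 2)" using that by (intro mult_right_mono) auto
    then have "u * (real k + 2) - 1 \<le> 1 * (real k + 1)" by (simp add: algebra_simps)
    then show ?thesis by (subst pos_divide_le_eq) auto
  qed
  then have b: "\<sigma>2 k t \<in> sq" unfolding \<sigma>2_def sq_def using t by auto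
  show "closed_segment (\<sigma>1 l r k t) (\<sigma>2 k t) \<subseteq> sq" by (rule closed_segment_subset[OF a b convex_sq])
qed

context pdm
begin

definition \<alpha>k :: "(nat \<Rightarrow> real \<Rightarrow> 'a) \<Rightarrow> nat \<Rightarrow> nat \<Rightarrow> real \<Rightarrow> 'a" where
  "\<alpha>k \<alpha> k n = (if k < n then \<alpha> n else (\<lambda>_. e))"

definition Xk where "Xk l r \<alpha> k = arr e l r (\<alpha>k \<alpha> k)"

definition Fk where "Fk l r \<alpha> k q = mop (\<alpha> (Suc k) (fst q)) (Xk l r \<alpha> (Suc k) (snd q))"

definition Yk where "Yk l r \<alpha> k = Fk l r \<alpha> k \<circ> \<sigma>2 k"

definition Vs :: "(nat \<Rightarrow> real \<Rightarrow> 'a) \<Rightarrow> nat \<Rightarrow> 'a set" where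
  "Vs \<alpha> k = {\<alpha> m u | m u. k < m \<and> u \<in> {0..1}}"

context
  fixes l r :: "nat \<Rightarrow> real" and \<alpha> :: "nat \<Rightarrow> real \<Rightarrow> 'a"
  assumes iv: "ivf l r" and lfa: "lf e \<alpha>" and nul: "null_sequence e \<alpha>"
begin

lemma \<alpha>0: "n \<ge> 1 \<Longrightarrow> \<alpha> n 0 = e" and \<alpha>1: "n \<ge> 1 \<Longrightarrow> \<alpha> n 1 = e" and \<alpha>path: "n \<ge> 1 \<Longrightarrow> path (\<alpha> n)"
  using lfa unfolding lf_def by auto

lemma lf_k: "lf e (\<alpha>k \<alpha> k)"
  using lfa unfolding lf_def \<alpha>k_def by (auto simp: path_def)

lemma nul_k: "null_sequence e (\<alpha>k \<alpha> k)"
  unfolding null_sequence_def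
proof (intro allI impI)
  fix W assume W: "open W \<and> e \<in> W"
  then obtain N where N: "\<forall>n\<ge>N. path_image (\<alpha> n) \<subseteq> W"
    using nul unfolding null_sequence_def eventually_sequentially by blast
  show "\<forall>\<^sub>F n in sequentially. path_image (\<alpha>k \<alpha> k n) \<subseteq> W"
    unfolding eventually_sequentially
  proof (intro exI[of _ N] allI impI)
    fix n assume "N \<le> n"
    then show "path_image (\<alpha>k \<alpha> k n) \<subseteq> W" using N W unfolding \<alpha>k_def path_image_def by auto
  qed
qed

lemma X_path: "path (Xk l r \<alpha> k)"
  unfolding Xk_def by (rule arr_path[OF iv lf_k nul_k])

lemma X_0: "Xk l r \<alpha> k 0 = e"
  unfolding Xk_def by (rule arr_out) (use ivfD[OF iv] in force)

lemma X_1: "Xk l r \<alpha> k 1 = e"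
  unfolding Xk_def by (rule arr_out) (use ivfD[OF iv] in force)

lemma e_Vs: "e \<in> Vs \<alpha> k"
proof -
  have "e = \<alpha> (Suc k) 0" "k < Suc k" "(0::real) \<in> {0..1}" using \<alpha>0[of "Suc k"] by simp_all
  then show ?thesis unfolding Vs_def by blast
qed

lemma Vs_mono: "k \<le> k' \<Longrightarrow> Vs \<alpha> k' \<subseteq> Vs \<alpha> k" unfolding Vs_def by fastforce

lemma X_Vs: "Xk l r \<alpha> k t \<in> Vs \<alpha> k"
proof -
  consider "Xk l r \<alpha> k t = e" | n u where "n \<ge> 1" "u \<in> {0..1}" "Xk l r \<alpha> k t = \<alpha>k \<alpha> k n u"
    using arr_img[OF iv, of e "\<alpha>k \<alpha> k" t] unfolding Xk_def by blast
  then show ?thesis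
  proof cases
    case 1 then show ?thesis using e_Vs by simp
  next
    case 2 then show ?thesis using e_Vs unfolding \<alpha>k_def Vs_def by (auto split: if_splits)
  qed
qed

lemma F_cont: "continuous_on sq (Fk l r \<alpha> k)"
proof -
  have cf: "continuous_on sq fst" "continuous_on sq snd" by (intro continuous_intros)+
  have sf: "fst ` sq \<subseteq> {0..1}" "snd ` sq \<subseteq> {0..1}" unfolding sq_def by auto
  have "continuous_on sq (\<lambda>q. \<alpha> (Suc k) (fst q))"
    using continuous_on_compose2[OF \<alpha>path[of "Suc k", unfolded path_def] cf(1) sf(1)] by simp
  moreover have "continuous_on sq (\<lambda>q. Xk l r \<alpha> (Suc k) (snd q))"
    using continuous_on_compose2[OF X_path[of "Suc k", unfolded path_def] cf(2) sf(2)] by simp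
  ultimately show ?thesis unfolding Fk_def by (rule prod_cont[OF _ _ convex_sq])
qed

lemma F_Prod: "q \<in> sq \<Longrightarrow> Fk l r \<alpha> k q \<in> Prod mop \<alpha> k"
proof -
  assume q: "q \<in> sq"
  obtain m' u' where m': "Xk l r \<alpha> (Suc k) (snd q) = \<alpha> m' u'" "Suc k < m'" "u' \<in> {0..1}"
    using X_Vs[of "Suc k" "snd q"] unfolding Vs_def by blast
  have fq: "fst q \<in> {0..1}" using q unfolding sq_def by auto
  have "k < Suc k" by simp
  then have "mop (\<alpha> (Suc k) (fst q)) (\<alpha> m' u') \<in> Prod mop \<alpha> k"
    unfolding Prod_def using fq m'(2,3) Suc_lessD by blast
  then show ?thesis unfolding Fk_def m'(1) .
qed

lemma Vs_Prod: "Vs \<alpha> k \<subseteq> Prod mop \<alpha> k"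
proof
  fix x assume "x \<in> Vs \<alpha> k"
  then obtain m u where "x = \<alpha> m u" "k < m" "u \<in> {0..1}" unfolding Vs_def by blast
  moreover have "x = mop (\<alpha> m u) (\<alpha> (Suc k) 0)" using \<alpha>0[of "Suc k"] \<open>x = \<alpha> m u\<close> by simp
  moreover have "k < Suc k" "(0::real) \<in> {0..1}" by simp_all
  ultimately show "x \<in> Prod mop \<alpha> k" unfolding Prod_def by blast
qed

lemma cp_out_e: assumes "n \<ge> 1" "\<not> (l n < u \<and> u < r n)" shows "\<alpha> n (cp (l n) (r n) u) = e"
proof -
  have lr: "l n < r n" using ivfD[OF iv assms(1)] by simp
  have "u \<le> l n \<or> r n \<le> u" using assms by auto
  then show ?thesis using cp_le[OF lr] cp_ge[OF lr] \<alpha>0[OF assms(1)] \<alpha>1[OF assms(1)] by auto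
qed

lemma X_F_\<sigma>1: "Xk l r \<alpha> k = Fk l r \<alpha> k \<circ> \<sigma>1 l r k"
proof
  fix u
  show "Xk l r \<alpha> k u = (Fk l r \<alpha> k \<circ> \<sigma>1 l r k) u"
  proof (cases "\<exists>n\<ge>1. l n < u \<and> u < r n")
    case True
    then obtain n where n: "n \<ge> 1" "l n < u" "u < r n" by blast
    have Xk: "Xk l r \<alpha> k u = \<alpha>k \<alpha> k n (cp (l n) (r n) u)" unfolding Xk_def by (rule arr_in[OF iv n])
    have XSk: "Xk l r \<alpha> (Suc k) u = \<alpha>k \<alpha> (Suc k) n (cp (l n) (r n) u)" unfolding Xk_def by (rule arr_in[OF iv n])
    show ?thesis
    proof (cases "n = Suc k")
      case True
      then show ?thesis using Xk XSk unfolding Fk_def \<sigma>1_def \<alpha>k_def by simp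
    next
      case False
      have "\<not> (l (Suc k) < u \<and> u < r (Suc k))"
      proof
        assume h: "l (Suc k) < u \<and> u < r (Suc k)"
        have "ix l r u = Suc k" using h by (intro ix_eq[OF iv]) auto
        moreover have "ix l r u = n" by (rule ix_eq[OF iv n])
        ultimately show False using False by simp
      qed
      then have "\<alpha> (Suc k) (cp (l (Suc k)) (r (Suc k)) u) = e" by (intro cp_out_e) auto
      then show ?thesis using Xk XSk False unfolding Fk_def \<sigma>1_def \<alpha>k_def by auto
    qed
  next
    case False
    then have "\<alpha> (Suc k) (cp (l (Suc k)) (r (Suc k)) u) = e" by (intro cp_out_e) auto
    then show ?thesis using arr_out[OF False, where e=e and \<beta>="\<alpha>k \<alpha> k"] arr_out[OF False, where e=e and \<beta>="\<alpha>k \<alpha> (Suc k)"]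
      unfolding Fk_def \<sigma>1_def Xk_def by simp
  qed
qed

lemma X_hom_Y: "homotopic_paths (Prod mop \<alpha> k) (Xk l r \<alpha> k) (Yk l r \<alpha> k)"
proof -
  have "homotopic_paths (Fk l r \<alpha> k ` sq) (Fk l r \<alpha> k \<circ> \<sigma>1 l r k) (Fk l r \<alpha> k \<circ> \<sigma>2 k)"
    by (rule homotopic_paths_continuous_image[OF sq_hom[OF iv] F_cont]) auto
  then show ?thesis unfolding Yk_def X_F_\<sigma>1[symmetric]
    by (rule homotopic_paths_subset) (use F_Prod in auto)
qed

end

end

lemma \<nu>_less_iff: "\<nu> m < \<nu> n \<longleftrightarrow> m < n"
proof
  assume h: "\<nu> m < \<nu> n"
  show "m < n"
  proof (rule ccontr)
    assume "\<not> m < n" then have "n \<le> m" by simp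
    then have "\<nu> n \<le> \<nu> m" by (rule \<nu>_le)
    then show False using h by simp
  qed
qed (rule \<nu>_strict)

lemma \<nu>_eq: "\<nu> k = 1 - 1 / (real k + 1)" unfolding \<nu>_def by simp

definition \<theta>k :: "nat \<Rightarrow> real \<Rightarrow> real" where "\<theta>k k s = (s - \<nu> k) * ((real k + 1) * (real k + 2))"

lemma \<theta>k_range: "\<nu> k \<le> s \<Longrightarrow> s \<le> \<nu> (Suc k) \<Longrightarrow> \<theta>k k s \<in> {0..1}"
proof -
  assume s: "\<nu> k \<le> s" "s \<le> \<nu> (Suc k)"
  have p: "(real k + 1) * (real k + 2) > 0" by simp
  have "\<theta>k k s \<le> (\<nu> (Suc k) - \<nu> k) * ((real k + 1) * (real k + 2))"
    unfolding \<theta>k_def using s p by (intro mult_right_mono) auto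
  also have "\<dots> = 1" unfolding \<nu>_diff using p by simp
  finally show ?thesis using s p unfolding \<theta>k_def by simp
qed

lemma \<theta>k_end: "\<theta>k k (\<nu> (Suc k)) = 1"
proof -
  have p: "(real k + 1) * (real k + 2) > 0" by simp
  then show ?thesis unfolding \<theta>k_def \<nu>_diff by simp
qed

lemma \<theta>k_start: "\<theta>k k (\<nu> k) = 0" unfolding \<theta>k_def by simp

lemma tail_range: "\<nu> k \<le> t \<Longrightarrow> t \<le> 1 \<Longrightarrow> (t - \<nu> k) * (real k + 1) \<in> {0..1}"
proof -
  assume t: "\<nu> k \<le> t" "t \<le> 1"
  have "(t - \<nu> k) * (real k + 1) \<le> (1 - \<nu> k) * (real k + 1)" using t by (intro mult_right_mono) auto
  also have "\<dots> = 1" unfolding \<nu>_eq by (simp add: field_simps)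
  finally show ?thesis using t by simp
qed

context pdm
begin

definition \<omega> where "\<omega> \<alpha> = arr e l\<omega> r\<omega> \<alpha>"

definition gk where "gk l r \<alpha> k = (SOME h. continuous_on sq h \<and> h \<in> sq \<rightarrow> Prod mop \<alpha> k \<and>
    (\<forall>x\<in>{0..1}. h (0,x) = Xk l r \<alpha> k x) \<and> (\<forall>x\<in>{0..1}. h (1,x) = Yk l r \<alpha> k x) \<and>
    (\<forall>t\<in>{0..1}. pathstart (h \<circ> Pair t) = pathstart (Xk l r \<alpha> k) \<and> pathfinish (h \<circ> Pair t) = pathfinish (Xk l r \<alpha> k)))"

definition hk where "hk l r \<alpha> k q = (if snd q \<le> \<nu> k then \<omega> \<alpha> (snd q) else gk l r \<alpha> k (fst q, (snd q - \<nu> k) * (real k + 1)))"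

definition HH where "HH l r \<alpha> q = (if 1 \<le> fst q then \<omega> \<alpha> (snd q) else hk l r \<alpha> (idx (fst q)) (\<theta>k (idx (fst q)) (fst q), snd q))"

context
  fixes l r :: "nat \<Rightarrow> real" and \<alpha> :: "nat \<Rightarrow> real \<Rightarrow> 'a"
  assumes iv: "ivf l r" and lfa: "lf e \<alpha>" and nul: "null_sequence e \<alpha>"
begin

lemma g_props: "continuous_on sq (gk l r \<alpha> k) \<and> gk l r \<alpha> k \<in> sq \<rightarrow> Prod mop \<alpha> k \<and>
    (\<forall>x\<in>{0..1}. gk l r \<alpha> k (0,x) = Xk l r \<alpha> k x) \<and> (\<forall>x\<in>{0..1}. gk l r \<alpha> k (1,x) = Yk l r \<alpha> k x) \<and>
    (\<forall>t\<in>{0..1}. pathstart (gk l r \<alpha> k \<circ> Pair t) = pathstart (Xk l r \<alpha> k) \<and> pathfinish (gk l r \<alpha> k \<circ> Pair t) = pathfinish (Xk l r \<alpha> k))"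
proof -
  have "homotopic_paths (Prod mop \<alpha> k) (Xk l r \<alpha> k) (Yk l r \<alpha> k)" by (rule X_hom_Y[OF iv lfa nul])
  then have "\<exists>h. continuous_on sq h \<and> h \<in> sq \<rightarrow> Prod mop \<alpha> k \<and>
    (\<forall>x\<in>{0..1}. h (0,x) = Xk l r \<alpha> k x) \<and> (\<forall>x\<in>{0..1}. h (1,x) = Yk l r \<alpha> k x) \<and>
    (\<forall>t\<in>{0..1}. pathstart (h \<circ> Pair t) = pathstart (Xk l r \<alpha> k) \<and> pathfinish (h \<circ> Pair t) = pathfinish (Xk l r \<alpha> k))"
    unfolding homotopic_paths sq_def by blast
  then show ?thesis unfolding gk_def by (rule someI_ex)
qed

lemma g_cont: "continuous_on sq (gk l r \<alpha> k)" using g_props by blast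
lemma g_in: "q \<in> sq \<Longrightarrow> gk l r \<alpha> k q \<in> Prod mop \<alpha> k" using g_props by blast
lemma g_0: "x \<in> {0..1} \<Longrightarrow> gk l r \<alpha> k (0,x) = Xk l r \<alpha> k x" using g_props by blast
lemma g_1: "x \<in> {0..1} \<Longrightarrow> gk l r \<alpha> k (1,x) = Yk l r \<alpha> k x" using g_props by blast
lemma g_s0: "s \<in> {0..1} \<Longrightarrow> gk l r \<alpha> k (s,0) = e"
  using g_props[of k] X_0[OF iv lfa nul, of k] unfolding pathstart_def by (auto simp: o_def)
lemma g_s1: "s \<in> {0..1} \<Longrightarrow> gk l r \<alpha> k (s,1) = e"
  using g_props[of k] X_1[OF iv lfa nul, of k] unfolding pathfinish_def by (auto simp: o_def)

lemma \<omega>_path: "path (\<omega> \<alpha>)" unfolding \<omega>_def by (rule arr_path[OF ivf_\<omega> lfa nul])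

lemma \<omega>_\<nu>: "\<omega> \<alpha> (\<nu> k) = e"
  unfolding \<omega>_def
proof (rule arr_out)
  show "\<not> (\<exists>n\<ge>1. l\<omega> n < \<nu> k \<and> \<nu> k < r\<omega> n)"
  proof
    assume "\<exists>n\<ge>1. l\<omega> n < \<nu> k \<and> \<nu> k < r\<omega> n"
    then obtain n where "n \<ge> 1" "\<nu> (n - 1) < \<nu> k" "\<nu> k < \<nu> n" unfolding l\<omega>_def r\<omega>_def by blast
    then have "n - 1 < k" "k < n" using \<nu>_less_iff by blast+
    then show False by simp
  qed
qed

lemma \<omega>_0: "\<omega> \<alpha> 0 = e" using \<omega>_\<nu>[of 0] by simp
lemma \<omega>_1: "\<omega> \<alpha> 1 = e" unfolding \<omega>_def by (rule arr_\<omega>_1)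

lemma \<omega>_seg: "\<nu> k \<le> t \<Longrightarrow> t \<le> \<nu> (Suc k) \<Longrightarrow> \<omega> \<alpha> t = \<alpha> (Suc k) (cp (\<nu> k) (\<nu> (Suc k)) t)"
  unfolding \<omega>_def using arr_closed[OF ivf_\<omega> lfa, of "Suc k" t] unfolding l\<omega>_def r\<omega>_def by simp

lemma hk_cont: "continuous_on sq (hk l r \<alpha> k)"
proof -
  have c1: "continuous_on {q \<in> sq. snd q \<le> \<nu> k} (\<lambda>q. \<omega> \<alpha> (snd q))"
  proof -
    have "continuous_on {q \<in> sq. snd q \<le> \<nu> k} snd" by (intro continuous_intros)
    moreover have "snd ` {q \<in> sq. snd q \<le> \<nu> k} \<subseteq> {0..1}" unfolding sq_def by auto
    ultimately show ?thesis using continuous_on_compose2[OF \<omega>_path[unfolded path_def]] by blast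
  qed
  have c2: "continuous_on {q \<in> sq. \<nu> k \<le> snd q} (\<lambda>q. gk l r \<alpha> k (fst q, (snd q - \<nu> k) * (real k + 1)))"
  proof -
    have "continuous_on {q \<in> sq. \<nu> k \<le> snd q} (\<lambda>q. (fst q, (snd q - \<nu> k) * (real k + 1)))"
      by (intro continuous_intros)
    moreover have "(\<lambda>q. (fst q, (snd q - \<nu> k) * (real k + 1))) ` {q \<in> sq. \<nu> k \<le> snd q} \<subseteq> sq"
      using tail_range unfolding sq_def by auto
    ultimately show ?thesis using continuous_on_compose2[OF g_cont] by blast
  qed
  have "continuous_on sq (\<lambda>q. if snd q \<le> \<nu> k then \<omega> \<alpha> (snd q) else gk l r \<alpha> k (fst q, (snd q - \<nu> k) * (real k + 1)))"
  proof (rule continuous_on_cases_le[OF c1 c2])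
    show "continuous_on sq snd" by (intro continuous_intros)
    fix q assume q: "q \<in> sq" "snd q = \<nu> k"
    then show "\<omega> \<alpha> (snd q) = gk l r \<alpha> k (fst q, (snd q - \<nu> k) * (real k + 1))"
      using \<omega>_\<nu> g_s0 unfolding sq_def by auto
  qed
  then show ?thesis unfolding hk_def .
qed


lemma match: assumes t: "t \<in> {0..1}" shows "hk l r \<alpha> k (1,t) = hk l r \<alpha> (Suc k) (0,t)"
proof -
  define a where "a = real k"
  have a0: "a \<ge> 0" unfolding a_def by simp
  have nk: "\<nu> k = 1 - 1/(a+1)" unfolding a_def \<nu>_eq by simp
  have nS: "\<nu> (Suc k) = 1 - 1/(a+2)" unfolding a_def \<nu>_eq by simp
  have mono: "\<nu> k < \<nu> (Suc k)" by (rule \<nu>_mono)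
  have "0 \<le> real k * real k" "0 \<le> real k * 3" by simp_all
  then have pos1: "2 + (real k * real k + real k * 3) \<noteq> 0" by linarith
  consider "t \<le> \<nu> k" | "\<nu> k < t" "t \<le> \<nu> (Suc k)" | "\<nu> (Suc k) < t" by linarith
  then show ?thesis
  proof cases
    case 1 then show ?thesis unfolding hk_def using mono by simp
  next
    case 2
    define u where "u = (t - \<nu> k) * (real k + 1)"
    have u01: "u \<in> {0..1}" unfolding u_def using tail_range[of k t] 2 t by auto
    have uk: "(real k + 2) * u \<le> 1"
    proof -
      have "(t - \<nu> k) \<le> \<nu> (Suc k) - \<nu> k" using 2 by simp
      then have "(real k + 2) * u \<le> (real k + 2) * ((\<nu> (Suc k) - \<nu> k) * (real k + 1))"
        unfolding u_def by (intro mult_left_mono mult_right_mono) auto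
      also have "\<dots> = 1" unfolding \<nu>_diff using pos1 by (simp add: field_simps)
      finally show ?thesis .
    qed
    have cpv: "cp (\<nu> k) (\<nu> (Suc k)) t = (real k + 2) * u"
      unfolding cp_in[OF mono less_imp_le[OF 2(1)] 2(2)] \<nu>_diff u_def using pos1 by (simp add: field_simps)
    have "hk l r \<alpha> k (1,t) = Yk l r \<alpha> k u" unfolding hk_def u_def using 2 g_1 u01 u_def by simp
    also have "\<dots> = mop (\<alpha> (Suc k) ((real k + 2) * u)) (Xk l r \<alpha> (Suc k) 0)"
    proof -
      have "max 0 ((u * (real k + 2) - 1) / (real k + 1)) = 0"
        using uk by (simp add: divide_le_0_iff mult.commute)
      then show ?thesis unfolding Yk_def Fk_def \<sigma>2_def using uk by simp
    qed
    also have "\<dots> = \<alpha> (Suc k) ((real k + 2) * u)" using X_0[OF iv lfa nul] by simp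
    also have "\<dots> = \<omega> \<alpha> t" using \<omega>_seg[of k t] 2 cpv by simp
    also have "\<dots> = hk l r \<alpha> (Suc k) (0,t)" unfolding hk_def using 2 by simp
    finally show ?thesis .
  next
  case 3
  define u where "u = (t - \<nu> k) * (real k + 1)"
  have u01: "u \<in> {0..1}" unfolding u_def using tail_range[of k t] 3 mono t by auto
  define w where "w = (t - \<nu> (Suc k)) * (real (Suc k) + 1)"
  have w01: "w \<in> {0..1}" unfolding w_def using tail_range[of "Suc k" t] 3 t by auto
  have uk: "1 < (real k + 2) * u"
  proof -
    have "\<nu> (Suc k) - \<nu> k < t - \<nu> k" using 3 by simp
    then have "(real k + 2) * ((\<nu> (Suc k) - \<nu> k) * (real k + 1)) < (real k + 2) * u"
      unfolding u_def by (intro mult_strict_left_mono mult_strict_right_mono) auto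
    moreover have "(real k + 2) * ((\<nu> (Suc k) - \<nu> k) * (real k + 1)) = 1" unfolding \<nu>_diff using pos1 by (simp add: field_simps)
    ultimately show ?thesis by simp
  qed
  have k1: "real k + 1 \<noteq> 0" "real k + 2 \<noteq> 0" by linarith+
  have u': "u = t * (real k + 1) - real k" unfolding u_def \<nu>_eq using k1 by (simp add: field_simps)
  have w': "w = t * (real k + 2) - (real k + 1)" unfolding w_def \<nu>_eq using k1 by (simp add: field_simps)
  have "u * (real k + 2) - 1 = (real k + 1) * (t * (real k + 2) - (real k + 1))" unfolding u' by (simp add: algebra_simps)
  then have wv: "(u * (real k + 2) - 1) / (real k + 1) = w" unfolding w' using k1 by simp
  have "hk l r \<alpha> k (1,t) = Yk l r \<alpha> k u" unfolding hk_def u_def using 3 mono g_1 u01 u_def by simp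
  also have "\<dots> = mop (\<alpha> (Suc k) 1) (Xk l r \<alpha> (Suc k) w)"
  proof -
    have "max 0 ((u * (real k + 2) - 1) / (real k + 1)) = w" using wv w01 by simp
    moreover have "min 1 ((real k + 2) * u) = 1" using uk by simp
    ultimately show ?thesis unfolding Yk_def Fk_def \<sigma>2_def by simp
  qed
  also have "\<dots> = Xk l r \<alpha> (Suc k) w" using \<alpha>1[OF iv lfa nul, of "Suc k"] by simp
  also have "\<dots> = hk l r \<alpha> (Suc k) (0,t)" unfolding hk_def w_def using 3 g_0 w01 w_def by simp
  finally show ?thesis .
  qed
qed


lemma H_on_piece: assumes q: "q \<in> {\<nu> n..\<nu> (Suc n)} \<times> {0..1}"
  shows "HH l r \<alpha> q = hk l r \<alpha> n (\<theta>k n (fst q), snd q)"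
proof -
  obtain s y where sy: "q = (s,y)" by fastforce
  have s: "\<nu> n \<le> s" "s \<le> \<nu> (Suc n)" "y \<in> {0..1}" using q sy by auto
  have s1: "s < 1" using s(2) \<nu>_lt1[of "Suc n"] by linarith
  show ?thesis
  proof (cases "s < \<nu> (Suc n)")
    case True
    then show ?thesis unfolding HH_def sy using idx_eq[OF s(1) True] s1 by simp
  next
    case False
    then have se: "s = \<nu> (Suc n)" using s by simp
    have "idx s = Suc n" unfolding se by (rule idx_eq) (auto simp: \<nu>_mono)
    then have "HH l r \<alpha> q = hk l r \<alpha> (Suc n) (0, y)" unfolding HH_def sy using s1 se \<theta>k_start by simp
    also have "\<dots> = hk l r \<alpha> n (1, y)" using match[OF s(3)] by simp
    also have "\<dots> = hk l r \<alpha> n (\<theta>k n (fst q), snd q)" using \<theta>k_end[of n] by (simp add: sy se)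
    finally show ?thesis .
  qed
qed

lemma H_piece: "continuous_on ({\<nu> n..\<nu> (Suc n)} \<times> {0..1}) (HH l r \<alpha>)"
proof -
  have "continuous_on ({\<nu> n..\<nu> (Suc n)} \<times> {0..1}) (\<lambda>q. (\<theta>k n (fst q), snd q))"
    unfolding \<theta>k_def by (intro continuous_intros)
  moreover have "(\<lambda>q. (\<theta>k n (fst q), snd q)) ` ({\<nu> n..\<nu> (Suc n)} \<times> {0..1}) \<subseteq> sq"
    using \<theta>k_range unfolding sq_def by auto
  ultimately have "continuous_on ({\<nu> n..\<nu> (Suc n)} \<times> {0..1}) (\<lambda>q. hk l r \<alpha> n (\<theta>k n (fst q), snd q))"
    using continuous_on_compose2[OF hk_cont] by blast
  then show ?thesis by (rule continuous_on_eq) (use H_on_piece in auto)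
qed

lemma H_lt1: assumes s: "0 \<le> s" "s < 1" "y \<in> {0..1}"
  shows "HH l r \<alpha> (s,y) = (if y \<le> \<nu> (idx s) then \<omega> \<alpha> y else
      gk l r \<alpha> (idx s) (\<theta>k (idx s) s, (y - \<nu> (idx s)) * (real (idx s) + 1)))"
  unfolding HH_def hk_def using s by simp

lemma H_lt1_in: assumes s: "0 \<le> s" "s < 1" "y \<in> {0..1}" "\<nu> (idx s) < y"
  shows "HH l r \<alpha> (s,y) \<in> Prod mop \<alpha> (idx s)"
proof -
  have "\<theta>k (idx s) s \<in> {0..1}" using \<theta>k_range idx_bounds[OF s(1,2)] by simp
  moreover have "(y - \<nu> (idx s)) * (real (idx s) + 1) \<in> {0..1}" using tail_range s by auto
  ultimately show ?thesis unfolding H_lt1[OF s(1-3)] using s(4) g_in unfolding sq_def by auto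
qed

lemma H_top: assumes x: "x \<in> {0..1}" and B: "open B" "HH l r \<alpha> (1,x) \<in> B"
  shows "\<exists>A N. open A \<and> x \<in> A \<and> (\<forall>s y. \<nu> N < s \<and> s \<le> 1 \<and> y \<in> {0..1} \<and> y \<in> A \<longrightarrow> HH l r \<alpha> (s,y) \<in> B)"
proof -
  have wB: "\<omega> \<alpha> x \<in> B" using B unfolding HH_def by simp
  obtain A0 where A0: "open A0" "x \<in> A0" "\<forall>y\<in>{0..1}. y \<in> A0 \<longrightarrow> \<omega> \<alpha> y \<in> B"
    using continuous_on_topological[THEN iffD1, OF \<omega>_path[unfolded path_def], rule_format, OF x B(1) wB] by blast
  show ?thesis
  proof (cases "x < 1")
    case True
    obtain N where N: "x < \<nu> N" using \<nu>_above[OF True] by blast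
    show ?thesis
    proof (intro exI[of _ "A0 \<inter> {..<\<nu> N}"] exI[of _ N] conjI allI impI)
      show "open (A0 \<inter> {..<\<nu> N})" using A0(1) by auto
      show "x \<in> A0 \<inter> {..<\<nu> N}" using A0(2) N by auto
      fix s y assume h: "\<nu> N < s \<and> s \<le> 1 \<and> y \<in> {0..1} \<and> y \<in> A0 \<inter> {..<\<nu> N}"
      show "HH l r \<alpha> (s,y) \<in> B"
      proof (cases "s < 1")
        case True
        have s0: "0 \<le> s" using h \<nu>_ge0[of N] by linarith
        have "N \<le> idx s" using idx_ge[OF s0 True] h by simp
        then have "y \<le> \<nu> (idx s)" using h \<nu>_le[of N "idx s"] by simp
        moreover have y: "y \<in> {0..1}" using h by simp
        ultimately show ?thesis unfolding H_lt1[OF s0 True y] using h A0(3) by auto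
      next
        case False
        then show ?thesis using h A0(3) unfolding HH_def by auto
      qed
    qed
  next
    case False
    then have x1: "x = 1" using x by simp
    have eB: "e \<in> B" using wB x1 \<omega>_1 by simp
    obtain K where K: "\<forall>k\<ge>K. Prod mop \<alpha> k \<subseteq> B" using small[OF lfa nul B(1) eB] by blast
    show ?thesis
    proof (intro exI[of _ A0] exI[of _ K] conjI allI impI)
      show "open A0" "x \<in> A0" using A0 by auto
      fix s y assume h: "\<nu> K < s \<and> s \<le> 1 \<and> y \<in> {0..1} \<and> y \<in> A0"
      show "HH l r \<alpha> (s,y) \<in> B"
      proof (cases "s < 1")
        case True
        have s0: "0 \<le> s" using h \<nu>_ge0[of K] by linarith
        have kK: "K \<le> idx s" using idx_ge[OF s0 True] h by simp
        show ?thesis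
        proof (cases "y \<le> \<nu> (idx s)")
          case True
          have y: "y \<in> {0..1}" using h by simp
          show ?thesis unfolding H_lt1[OF s0 \<open>s < 1\<close> y] using True h A0(3) by auto
        next
          case False
          then have "HH l r \<alpha> (s,y) \<in> Prod mop \<alpha> (idx s)" using H_lt1_in[OF s0 \<open>s < 1\<close>] h by simp
          then show ?thesis using K kK by blast
        qed
      next
        case False
        then show ?thesis using h A0(3) unfolding HH_def by auto
      qed
    qed
  qed
qed

lemma H_cont: "continuous_on sq (HH l r \<alpha>)"
  unfolding sq_def
  by (rule seg_cont_full[OF closed_atLeastAtMost H_piece H_top])

lemma main_hom: "homotopic_paths UNIV (Xk l r \<alpha> 0) (\<omega> \<alpha>)"
  unfolding homotopic_paths
proof (intro exI[of _ "HH l r \<alpha>"] conjI ballI)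
  show "continuous_on ({0..1} \<times> {0..1}) (HH l r \<alpha>)" using H_cont unfolding sq_def .
  show "HH l r \<alpha> \<in> {0..1} \<times> {0..1} \<rightarrow> UNIV" by simp
  have i0: "idx 0 = 0" by (rule idx_eq) (auto simp: \<nu>_mono[of 0, simplified])
  fix x :: real assume x: "x \<in> {0..1}"
  have h0: "HH l r \<alpha> (0,x) = (if x \<le> \<nu> (idx 0) then \<omega> \<alpha> x else
      gk l r \<alpha> (idx 0) (\<theta>k (idx 0) 0, (x - \<nu> (idx 0)) * (real (idx 0) + 1)))" by (rule H_lt1) (use x in auto)
  show "HH l r \<alpha> (0, x) = Xk l r \<alpha> 0 x"
  proof (cases "x \<le> 0")
    case True
    then have "x = 0" using x by simp
    then show ?thesis unfolding h0 using i0 \<omega>_0 X_0[OF iv lfa nul] by simp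
  next
    case False
    then show ?thesis unfolding h0 using i0 g_0[OF x, of 0] \<theta>k_start[of 0] by simp
  qed
next
  fix x :: real assume x: "x \<in> {0..1}"
  show "HH l r \<alpha> (1, x) = \<omega> \<alpha> x" unfolding HH_def by simp
next
  fix t :: real assume t: "t \<in> {0..1}"
  show "pathstart (HH l r \<alpha> \<circ> Pair t) = pathstart (Xk l r \<alpha> 0)"
  proof (cases "t < 1")
    case True
    have t0: "0 \<le> t" using t by simp
    show ?thesis unfolding pathstart_def o_def H_lt1[OF t0 True, of 0, simplified] using \<nu>_ge0 \<omega>_0 X_0[OF iv lfa nul] by simp
  next
    case False
    then show ?thesis unfolding pathstart_def HH_def using \<omega>_0 X_0[OF iv lfa nul] by simp
  qed
  show "pathfinish (HH l r \<alpha> \<circ> Pair t) = pathfinish (Xk l r \<alpha> 0)"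
  proof (cases "t < 1")
    case True
    have th: "\<theta>k (idx t) t \<in> {0..1}" using \<theta>k_range idx_bounds[of t] t True by simp
    have one: "(1 - \<nu> (idx t)) * (real (idx t) + 1) = 1" unfolding \<nu>_eq by (simp add: field_simps)
    have "\<not> 1 \<le> \<nu> (idx t)" using \<nu>_lt1 by (simp add: not_le)
    have t0: "0 \<le> t" using t by simp
    show ?thesis unfolding pathfinish_def o_def H_lt1[OF t0 True, of 1, simplified] using \<open>\<not> 1 \<le> \<nu> (idx t)\<close> g_s1[OF th] X_1[OF iv lfa nul] one by simp
  next
    case False
    then show ?thesis unfolding pathfinish_def HH_def using \<omega>_1 X_1[OF iv lfa nul] by simp
  qed
qed

lemma X0_eq: "Xk l r \<alpha> 0 = arr e l r \<alpha>"
proof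
  fix t
  show "Xk l r \<alpha> 0 t = arr e l r \<alpha> t"
  proof (cases "\<exists>n\<ge>1. l n < t \<and> t < r n")
    case True
    then obtain n where n: "n \<ge> 1" "l n < t" "t < r n" by blast
    show ?thesis unfolding Xk_def arr_in[OF iv n] using n unfolding \<alpha>k_def by simp
  next
    case False
    show ?thesis unfolding Xk_def using arr_out[OF False, where e=e and \<beta>="\<alpha>k \<alpha> 0"] arr_out[OF False, where e=e and \<beta>=\<alpha>] by simp
  qed
qed

lemma arr_hom_\<omega>: "homotopic_paths UNIV (arr e l r \<alpha>) (\<omega> \<alpha>)"
  using main_hom unfolding X0_eq .

end

end

lemma ivf_gap: "ivf gap_left gap_right"
  unfolding ivf_def
proof (intro conjI allI impI)
  fix n :: nat assume n: "1 \<le> n"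
  show "0 \<le> gap_left n" "gap_left n < gap_right n" "gap_right n \<le> 1" using gap_bounds[OF n] by auto
next
  fix n m :: nat assume "1 \<le> n" "1 \<le> m" "n \<noteq> m"
  then show "gap_right n \<le> gap_left m \<or> gap_right m \<le> gap_left n" using key by blast
qed

lemma slide_eq:
  assumes "pre_delta_monoid mop e"
  shows "transfinite_slide mop \<beta> \<alpha> = (\<lambda>t. mop (\<beta> (cantor_fun t)) (arr e gap_left gap_right \<alpha> t))"
proof
  interpret P: pdm mop e by (rule pdm.intro) (rule assms)
  fix t
  have iff: "t \<in> {0..1} - cantor_set \<longleftrightarrow> (\<exists>n\<ge>1. gap_left n < t \<and> t < gap_right n)"
    unfolding cantor_set_def gap_def using gap_bounds by (auto; smt (verit, best) atLeastAtMost_iff gap_bounds)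
  show "transfinite_slide mop \<beta> \<alpha> t = mop (\<beta> (cantor_fun t)) (arr e gap_left gap_right \<alpha> t)"
  proof (cases "\<exists>n\<ge>1. gap_left n < t \<and> t < gap_right n")
    case True
    have gi: "gap_index t = ix gap_left gap_right t" unfolding gap_index_def ix_def gap_def by simp
    show ?thesis unfolding transfinite_slide_def arr_def using True iff gi unfolding gap_param_def by simp
  next
    case False
    have nt: "t \<notin> {0..1} - cantor_set" using False iff by blast
    show ?thesis unfolding transfinite_slide_def using nt arr_out[OF False, where e=e and \<beta>=\<alpha>] by (simp only: if_False) simp
  qed
qed


theorem mainTheorem14:
  fixes mop :: "'a::topological_space \<Rightarrow> 'a \<Rightarrow> 'a" and e b :: 'a
    and \<alpha> :: "nat \<Rightarrow> real \<Rightarrow> 'a" and \<beta> \<beta>' :: "real \<Rightarrow> 'a" and \<phi> :: "nat \<Rightarrow> nat"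
  assumes "pre_delta_monoid mop e"
    and "path_connected (UNIV :: 'a set)"
    and "\<forall>n\<ge>1. loop_at e (\<alpha> n)"
    and "null_sequence e \<alpha>"
    and "path \<beta>" "pathstart \<beta> = e" "pathfinish \<beta> = b"
    and "path \<beta>'" "pathstart \<beta>' = e" "pathfinish \<beta>' = b"
    and "homotopic_paths UNIV \<beta> \<beta>'"
    and "bij_betw \<phi> {1..} {1..}"
  shows "homotopic_paths UNIV (transfinite_slide mop \<beta> \<alpha>)
           (transfinite_slide mop \<beta>' (\<lambda>n. \<alpha> (\<phi> n)))"
proof -
  interpret P: pdm mop e by (rule pdm.intro) (rule assms(1))
  have lfa: "lf e \<alpha>" using assms(3) unfolding lf_def loop_at_def pathstart_def pathfinish_def by auto
  note nul = assms(4)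
  define \<psi> where "\<psi> = inv_into {1..} \<phi>"
  have bij\<psi>: "bij_betw \<psi> {1..} {1..}" unfolding \<psi>_def by (rule bij_betw_inv_into[OF assms(12)])
  define l' where "l' n = gap_left (\<psi> n)" for n
  define r' where "r' n = gap_right (\<psi> n)" for n
  have \<psi>1: "n \<ge> 1 \<Longrightarrow> \<psi> n \<ge> 1" for n using bij_betwE[OF bij\<psi>] by auto
  have \<phi>1: "n \<ge> 1 \<Longrightarrow> \<phi> n \<ge> 1" for n using bij_betwE[OF assms(12)] by auto
  have \<psi>\<phi>: "n \<ge> 1 \<Longrightarrow> \<psi> (\<phi> n) = n" for n unfolding \<psi>_def
    using bij_betw_imp_inj_on[OF assms(12)] by (simp add: inv_into_f_f)
  have \<psi>inj: "n \<ge> 1 \<Longrightarrow> m \<ge> 1 \<Longrightarrow> \<psi> n = \<psi> m \<Longrightarrow> n = m" for n m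
    using bij_betw_imp_inj_on[OF bij\<psi>] unfolding inj_on_def by auto
  have iv': "ivf l' r'"
    unfolding ivf_def l'_def r'_def
  proof (intro conjI allI impI)
    fix n :: nat assume n: "1 \<le> n"
    show "0 \<le> gap_left (\<psi> n)" "gap_left (\<psi> n) < gap_right (\<psi> n)" "gap_right (\<psi> n) \<le> 1"
      using gap_bounds[OF \<psi>1[OF n]] by auto
  next
    fix n m :: nat assume h: "1 \<le> n" "1 \<le> m" "n \<noteq> m"
    then have "\<psi> n \<noteq> \<psi> m" using \<psi>inj by blast
    then show "gap_right (\<psi> n) \<le> gap_left (\<psi> m) \<or> gap_right (\<psi> m) \<le> gap_left (\<psi> n)"
      using key[OF \<psi>1[OF h(1)] \<psi>1[OF h(2)]] by blast
  qed
  define A where "A = arr e gap_left gap_right \<alpha>"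
  define A' where "A' = arr e l' r' \<alpha>"
  have S: "transfinite_slide mop \<beta> \<alpha> = (\<lambda>t. mop (\<beta> (cantor_fun t)) (A t))"
    unfolding A_def by (rule slide_eq[OF assms(1)])
  have S': "transfinite_slide mop \<beta>' (\<lambda>n. \<alpha> (\<phi> n)) = (\<lambda>t. mop (\<beta>' (cantor_fun t)) (A' t))"
  proof -
    have "arr e gap_left gap_right (\<lambda>n. \<alpha> (\<phi> n)) = A'"
    proof
      fix t
      show "arr e gap_left gap_right (\<lambda>n. \<alpha> (\<phi> n)) t = A' t"
      proof (cases "\<exists>n\<ge>1. gap_left n < t \<and> t < gap_right n")
        case True
        then obtain j where j: "j \<ge> 1" "gap_left j < t" "t < gap_right j" by blast
        have j': "\<phi> j \<ge> 1" "l' (\<phi> j) < t" "t < r' (\<phi> j)" using j \<phi>1 \<psi>\<phi> unfolding l'_def r'_def by auto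
        show ?thesis unfolding A'_def arr_in[OF ivf_gap j] arr_in[OF iv' j'] l'_def r'_def \<psi>\<phi>[OF j(1)] ..
      next
        case False
        have "\<not> (\<exists>n\<ge>1. l' n < t \<and> t < r' n)"
        proof
          assume "\<exists>n\<ge>1. l' n < t \<and> t < r' n"
          then obtain n where "n \<ge> 1" "l' n < t" "t < r' n" by blast
          then show False using False \<psi>1 unfolding l'_def r'_def by blast
        qed
        then show ?thesis unfolding A'_def using arr_out[OF False, where e=e and \<beta>="\<lambda>n. \<alpha> (\<phi> n)"]
           arr_out[where e=e and \<beta>=\<alpha> and l=l' and r=r' and t=t] by simp
      qed
    qed
    then show ?thesis using slide_eq[OF assms(1), of \<beta>' "\<lambda>n. \<alpha> (\<phi> n)"] by simp
  qed
  have hA: "homotopic_paths UNIV A A'"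
  proof -
    have "homotopic_paths UNIV A (P.\<omega> \<alpha>)" unfolding A_def by (rule P.arr_hom_\<omega>[OF ivf_gap lfa nul])
    moreover have "homotopic_paths UNIV A' (P.\<omega> \<alpha>)" unfolding A'_def by (rule P.arr_hom_\<omega>[OF iv' lfa nul])
    ultimately show ?thesis by (meson homotopic_paths_sym homotopic_paths_trans)
  qed
  have hG: "homotopic_paths UNIV (\<beta> \<circ> cantor_fun) (\<beta>' \<circ> cantor_fun)"
  proof -
    have Gc: "continuous_on {0..1} cantor_fun" using G_cont by (rule continuous_on_subset) simp
    have Gr: "cantor_fun \<in> {0..1} \<rightarrow> {0..1}" using G_ge0 G_le1 by auto
    have "homotopic_paths UNIV \<beta> (\<beta> \<circ> cantor_fun)"
      by (rule homotopic_paths_reparametrize[OF assms(5) _ Gc Gr G0 G1]) auto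
    moreover have "homotopic_paths UNIV \<beta>' (\<beta>' \<circ> cantor_fun)"
      by (rule homotopic_paths_reparametrize[OF assms(8) _ Gc Gr G0 G1]) auto
    ultimately show ?thesis using assms(11) by (meson homotopic_paths_sym homotopic_paths_trans)
  qed
  from hG[unfolded homotopic_paths] obtain G :: "real \<times> real \<Rightarrow> 'a" where G0: "continuous_on ({0..1} \<times> {0..1}) G \<and> G \<in> {0..1} \<times> {0..1} \<rightarrow> UNIV \<and>
      (\<forall>x\<in>{0..1}. G (0,x) = (\<beta> \<circ> cantor_fun) x) \<and> (\<forall>x\<in>{0..1}. G (1,x) = (\<beta>' \<circ> cantor_fun) x) \<and>
      (\<forall>t\<in>{0..1}. pathstart (G \<circ> Pair t) = pathstart (\<beta> \<circ> cantor_fun) \<and> pathfinish (G \<circ> Pair t) = pathfinish (\<beta> \<circ> cantor_fun))"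
    ..
  then have G: "continuous_on ({0..1} \<times> {0..1}) G"
      "\<forall>x\<in>{0..1}. G (0,x) = (\<beta> \<circ> cantor_fun) x" "\<forall>x\<in>{0..1}. G (1,x) = (\<beta>' \<circ> cantor_fun) x"
      "\<forall>t\<in>{0..1}. pathstart (G \<circ> Pair t) = pathstart (\<beta> \<circ> cantor_fun) \<and> pathfinish (G \<circ> Pair t) = pathfinish (\<beta> \<circ> cantor_fun)"
    by blast+
  from hA[unfolded homotopic_paths] obtain \<Phi> :: "real \<times> real \<Rightarrow> 'a" where \<Phi>0: "continuous_on ({0..1} \<times> {0..1}) \<Phi> \<and> \<Phi> \<in> {0..1} \<times> {0..1} \<rightarrow> UNIV \<and>
      (\<forall>x\<in>{0..1}. \<Phi> (0,x) = A x) \<and> (\<forall>x\<in>{0..1}. \<Phi> (1,x) = A' x) \<and>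
      (\<forall>t\<in>{0..1}. pathstart (\<Phi> \<circ> Pair t) = pathstart A \<and> pathfinish (\<Phi> \<circ> Pair t) = pathfinish A)"
    ..
  then have \<Phi>: "continuous_on ({0..1} \<times> {0..1}) \<Phi>"
      "\<forall>x\<in>{0..1}. \<Phi> (0,x) = A x" "\<forall>x\<in>{0..1}. \<Phi> (1,x) = A' x"
      "\<forall>t\<in>{0..1}. pathstart (\<Phi> \<circ> Pair t) = pathstart A \<and> pathfinish (\<Phi> \<circ> Pair t) = pathfinish A"
    by blast+
  have Hc: "continuous_on ({0..1} \<times> {0..1}) (\<lambda>q. mop (G q) (\<Phi> q))"
    using P.prod_cont[OF G(1) \<Phi>(1)] convex_sq unfolding sq_def by blast
  show ?thesis unfolding S S' homotopic_paths
  proof (intro exI[of _ "\<lambda>q. mop (G q) (\<Phi> q)"] conjI ballI Hc)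
    show "(\<lambda>q. mop (G q) (\<Phi> q)) \<in> {0..1} \<times> {0..1} \<rightarrow> UNIV" by simp
    fix x :: real assume x: "x \<in> {0..1}"
    show "mop (G (0, x)) (\<Phi> (0, x)) = mop (\<beta> (cantor_fun x)) (A x)" using G(2) \<Phi>(2) x by simp
    show "mop (G (1, x)) (\<Phi> (1, x)) = mop (\<beta>' (cantor_fun x)) (A' x)" using G(3) \<Phi>(3) x by simp
  next
    fix t :: real assume t: "t \<in> {0..1}"
    show "pathstart ((\<lambda>q. mop (G q) (\<Phi> q)) \<circ> Pair t) = pathstart (\<lambda>t. mop (\<beta> (cantor_fun t)) (A t))"
      using G(4) \<Phi>(4) t unfolding pathstart_def by auto
    show "pathfinish ((\<lambda>q. mop (G q) (\<Phi> q)) \<circ> Pair t) = pathfinish (\<lambda>t. mop (\<beta> (cantor_fun t)) (A t))"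
      using G(4) \<Phi>(4) t unfolding pathfinish_def by auto
  qed
qed

end
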